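(* Let $t>0$ and let $\phi_n(z)=\phi_n(z;t)$ be the orthonormal polynomials on the unit circle for the weight $w(z)=\frac{1}{2\pi I_0(t)}\exp\big(\tfrac12 t(z+z^{-1})\big)$, with leading coefficients $\kappa_n=\kappa_n(t)>0$. Then $\frac{d}{dt}\phi_0=0$ and for $n\ge1$ $$2\frac{d}{dt}\phi_n(z)=\Big[\frac{I_1(t)}{I_0(t)}+\frac{\phi_{n+1}(0)}{\kappa_{n+1}}\frac{\kappa_n}{\phi_n(0)}\Big]\phi_n(z)-\frac{\kappa_{n-1}}{\kappa_n}\Big[1+\frac{\phi_{n+1}(0)}{\kappa_{n+1}}\frac{\kappa_n}{\phi_n(0)}z\Big]\phi_{n-1}(z).$$ Moreover, for $n\ge1$, $$\frac{2}{\kappa_n}\frac{d\kappa_n}{dt}=\frac{I_1(t)}{I_0(t)}+\frac{\phi_{n+1}(0)}{\kappa_{n+1}}\frac{\phi_n(0)}{\kappa_n},\qquad \frac{2}{\phi_n(0)}\frac{d\phi_n(0)}{dt}=\frac{I_1(t)}{I_0(t)}+\frac{\phi_{n+1}(0)}{\kappa_{n+1}}\frac{\kappa_n}{\phi_n(0)}-\frac{\phi_{n-1}(0)}{\phi_n(0)}\frac{\kappa_{n-1}}{\kappa_n}.$$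
   Context: $I_\nu$ is the modified Bessel function of the first kind. Orthonormality means $\int_{|\zeta|=1}\phi_m(\zeta)\overline{\phi_n(\zeta)}w(\zeta)\frac{d\zeta}{i\zeta}=\delta_{m,n}$ (counterclockwise contour), $\phi_n(z)=\kappa_nz^n+\cdots$ with $\kappa_n>0$. It is assumed that $\phi_n(0)\neq 0$ where it appears in a denominator. *)

theory Defs
  imports "HOL-Complex_Analysis.Complex_Analysis" "HOL-Computational_Algebra.Polynomial"
begin

definition bessel_I :: "nat \<Rightarrow> real \<Rightarrow> real" where
  "bessel_I nu t = (\<Sum>k. (t/2) ^ (2*k + nu) / (fact k * fact (k + nu)))"

definition opuc_weight :: "real \<Rightarrow> complex \<Rightarrow> complex" where
  "opuc_weight t z = exp (complex_of_real t * (z + inverse z) / 2) / complex_of_real (2 * pi * bessel_I 0 t)"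

definition opuc_inner :: "(complex \<Rightarrow> complex) \<Rightarrow> complex poly \<Rightarrow> complex poly \<Rightarrow> complex" where
  "opuc_inner w p q = contour_integral (circlepath 0 1)
      (\<lambda>\<zeta>. poly p \<zeta> * cnj (poly q \<zeta>) * w \<zeta> / (\<i> * \<zeta>))"

definition is_opuc_family :: "(complex \<Rightarrow> complex) \<Rightarrow> (nat \<Rightarrow> complex poly) \<Rightarrow> bool" where
  "is_opuc_family w phi \<longleftrightarrow>
     (\<forall>n. degree (phi n) = n \<and> lead_coeff (phi n) \<in> \<real> \<and> Re (lead_coeff (phi n)) > 0) \<and>
     (\<forall>m n. opuc_inner w (phi m) (phi n) = (if m = n then 1 else 0))"

end

theory Submission
  imports Defs
begin

lemma circ_powi:
  "contour_integral (circlepath 0 1) (\<lambda>z. z powi m) = (if m = -1 then 2 * of_real pi * \<i> else 0)"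
proof (cases "m = -1")
  case True
  have "contour_integral (circlepath 0 1) (\<lambda>z::complex. z powi m) = contour_integral (circlepath 0 1) (\<lambda>z. 1 / (z - 0))"
    by (rule contour_integral_eq) (auto simp: True power_int_minus divide_inverse)
  also have "\<dots> = 2 * of_real pi * \<i>" by (rule contour_integral_circlepath) simp
  finally show ?thesis using True by simp
next
  case False
  have d: "((\<lambda>z::complex. z powi (m+1) / of_int (m+1)) has_field_derivative z powi m) (at z within (-{0}))"
    if "z \<in> -{0}" for z
  proof -
    have nz: "(of_int (m+1)::complex) \<noteq> 0" using False by (simp only: of_int_eq_0_iff)
    have nz2: "(of_int m + 1::complex) \<noteq> 0" using nz by simp
    show ?thesis using that
      by (auto intro!: derivative_eq_intros simp: nz nz2)
  qed
  have "((\<lambda>z. z powi m) has_contour_integral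
     ((\<lambda>z::complex. z powi (m+1) / of_int (m+1)) (pathfinish (circlepath 0 1)) - (\<lambda>z::complex. z powi (m+1) / of_int (m+1)) (pathstart (circlepath 0 1)))) (circlepath 0 1)"
    by (rule contour_integral_primitive[OF d]) auto
  then show ?thesis using False by (simp add: contour_integral_unique)
qed

definition bterm :: "nat \<Rightarrow> real \<Rightarrow> nat \<Rightarrow> real" where
  "bterm nu t k = (t/2)^(2*k+nu) / (fact k * fact (k+nu))"

lemma bessel_I_bterm: "bessel_I nu t = (\<Sum>k. bterm nu t k)"
  by (simp add: bessel_I_def bterm_def)

lemma bessel_summable: "summable (bterm nu t)"
proof (rule summable_comparison_test')
  show "summable (\<lambda>k. \<bar>t/2\<bar>^nu * (inverse (fact k) * ((t/2)^2)^k))"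
    by (intro summable_mult summable_exp)
  fix k
  define A where "A = \<bar>t/2\<bar>^nu * ((t/2)^2)^k / fact k"
  have A0: "0 \<le> A" unfolding A_def by simp
  have sq: "(\<bar>t\<bar>/2)^2 = (t/2)^2" by (simp add: power2_eq_square)
  have e: "norm (bterm nu t k) = A / fact (k+nu)"
    unfolding A_def by (simp add: bterm_def power_add power_mult power_abs abs_mult sq)
  have "A / fact (k+nu) \<le> A / 1"
    by (rule frac_le[OF A0 order.refl]) (simp_all add: fact_ge_1)
  moreover have "A / 1 = \<bar>t/2\<bar>^nu * (inverse (fact k) * ((t/2)^2)^k)"
    unfolding A_def div_by_1 divide_inverse by (simp only: mult_ac inverse_1 mult_1_left)
  ultimately show "norm (bterm nu t k) \<le> \<bar>t/2\<bar>^nu * (inverse (fact k) * ((t/2)^2)^k)"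
    unfolding e by simp
qed

lemma bessel_sums: "bterm nu t sums bessel_I nu t"
  using bessel_summable by (simp add: bessel_I_bterm summable_sums)

lemma bessel_I0_ge1: "bessel_I 0 t \<ge> 1"
proof -
  have "sum (bterm 0 t) {0} \<le> suminf (bterm 0 t)"
    by (rule sum_le_suminf[OF bessel_summable]) (auto simp: bterm_def power_mult)
  moreover have "sum (bterm 0 t) {0} = 1" by (simp add: bterm_def)
  ultimately show ?thesis by (simp only: bessel_I_bterm)
qed

lemma continuous_on_powi_sphere: "continuous_on (sphere 0 1) (\<lambda>z::complex. z powi m)"
  by (intro continuous_intros) auto

lemma circ_sum_powi:
  assumes "finite A"
  shows "contour_integral (circlepath 0 1) (\<lambda>z. \<Sum>l\<in>A. c l * z powi (e l))
       = 2 * of_real pi * \<i> * (\<Sum>l\<in>A. if e l = -1 then c l else 0)"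
proof -
  have int: "(\<lambda>z. c l * z powi (e l)) contour_integrable_on (circlepath 0 1)" for l
    by (rule contour_integrable_continuous_circlepath) (auto intro!: continuous_intros)
  have "contour_integral (circlepath 0 1) (\<lambda>z. \<Sum>l\<in>A. c l * z powi (e l))
      = (\<Sum>l\<in>A. contour_integral (circlepath 0 1) (\<lambda>z. c l * z powi (e l)))"
    by (rule contour_integral_sum[OF assms int])
  also have "\<dots> = (\<Sum>l\<in>A. c l * contour_integral (circlepath 0 1) (\<lambda>z. z powi (e l)))"
    by (intro sum.cong refl contour_integral_lmul) 
       (rule contour_integrable_continuous_circlepath, auto intro!: continuous_intros)
  also have "\<dots> = 2 * of_real pi * \<i> * (\<Sum>l\<in>A. if e l = -1 then c l else 0)"
    by (simp add: circ_powi sum_distrib_left if_distrib mult.commute cong: if_cong)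
  finally show ?thesis .
qed

lemma exp_circle_sums:
  fixes s :: real and d :: int
  defines "f \<equiv> (\<lambda>n z. ((of_real s * (z + inverse z) / 2)^n /\<^sub>R fact n) * z powi (d - 1))"
  shows "(\<lambda>n. contour_integral (circlepath 0 1) (f n))
     sums contour_integral (circlepath 0 1) (\<lambda>z. exp (of_real s * (z + inverse z) / 2) * z powi (d - 1))"
proof -
  let ?F = "\<lambda>z. exp (of_real s * (z + inverse z) / 2) * z powi (d - 1)"
  have bound: "norm (f n z) \<le> \<bar>s\<bar>^n / fact n" if z: "z \<in> sphere 0 1" for n z
  proof -
    have nz: "norm z = 1" using z by simp
    have "norm (z + inverse z) \<le> norm z + norm (inverse z)" by (rule norm_triangle_ineq)
    also have "\<dots> = 2" using nz by (simp add: norm_inverse)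
    finally have n2: "norm (z + inverse z) \<le> 2" .
    have "norm (of_real s * (z + inverse z) / 2) = \<bar>s\<bar> * norm (z + inverse z) / 2"
      by (simp add: norm_mult norm_divide)
    also have "\<dots> \<le> \<bar>s\<bar>" using mult_left_mono[OF n2, of "\<bar>s\<bar>"] by simp
    finally have b1: "norm (of_real s * (z + inverse z) / 2) \<le> \<bar>s\<bar>" .
    have "norm (f n z) = inverse (fact n) * norm (of_real s * (z + inverse z) / 2) ^ n"
      using nz by (simp add: f_def norm_mult norm_power norm_power_int)
    also have "\<dots> \<le> inverse (fact n) * \<bar>s\<bar>^n"
      by (intro mult_left_mono power_mono b1) auto
    also have "\<dots> = \<bar>s\<bar>^n / fact n" by (simp add: divide_inverse)
    finally show ?thesis .
  qed
  have summ: "summable (\<lambda>n. \<bar>s\<bar>^n / fact n)"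
    using summable_exp[of "\<bar>s\<bar>"] by (simp add: divide_inverse mult.commute)
  have ul0: "uniform_limit (sphere 0 1) (\<lambda>n z. \<Sum>i<n. f i z) (\<lambda>z. suminf (\<lambda>i. f i z)) sequentially"
    by (rule Weierstrass_m_test_ev[OF _ summ]) (use bound in auto)
  have lim: "suminf (\<lambda>i. f i z) = ?F z" for z
    unfolding f_def by (rule sums_unique[symmetric], rule sums_mult2, rule exp_converges)
  have ul: "uniform_limit (sphere 0 1) (\<lambda>n z. \<Sum>i<n. f i z) ?F sequentially"
    using ul0 by (simp add: lim)
  have intf: "f i contour_integrable_on circlepath 0 1" for i
    unfolding f_def
    by (rule contour_integrable_continuous_circlepath) (auto intro!: continuous_intros)
  have ints: "(\<lambda>z. \<Sum>i<n. f i z) contour_integrable_on circlepath 0 1" for n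
    by (rule contour_integrable_sum) (auto intro: intf)
  have "((\<lambda>n. contour_integral (circlepath 0 1) (\<lambda>z. \<Sum>i<n. f i z)) \<longlongrightarrow> contour_integral (circlepath 0 1) ?F) sequentially"
    by (rule contour_integral_uniform_limit_circlepath(2)[OF _ ul]) (auto intro: ints always_eventually)
  moreover have "contour_integral (circlepath 0 1) (\<lambda>z. \<Sum>i<n. f i z) = (\<Sum>i<n. contour_integral (circlepath 0 1) (f i))" for n
    by (rule contour_integral_sum) (auto intro: intf)
  ultimately show ?thesis by (simp add: sums_def)
qed

lemma pw_combine:
  fixes z :: complex
  assumes "z \<noteq> 0"
  shows "z^l * (inverse z)^m * z powi e = z powi (int l - int m + e)"
  using assms by (simp add: power_int_add power_int_diff power_int_minus field_simps)

lemma term_expand: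
  fixes z :: complex
  assumes "z \<noteq> 0"
  shows "((of_real s * (z + inverse z) / 2)^n /\<^sub>R fact n) * z powi (d - 1)
    = (\<Sum>l\<le>n. (of_real ((s/2)^n / fact n) * of_nat (n choose l)) * z powi (int l - int (n - l) + (d - 1)))"
proof -
  have "(of_real s * (z + inverse z) / 2)^n = of_real ((s/2)^n) * (z + inverse z)^n"
    by (simp add: power_mult_distrib power_divide)
  also have "(z + inverse z)^n = (\<Sum>l\<le>n. of_nat (n choose l) * z^l * (inverse z)^(n-l))"
    by (rule binomial_ring)
  finally have 1: "(of_real s * (z + inverse z) / 2)^n = of_real ((s/2)^n) * (\<Sum>l\<le>n. of_nat (n choose l) * z^l * (inverse z)^(n-l))" .
  have "((of_real s * (z + inverse z) / 2)^n /\<^sub>R fact n) * z powi (d - 1)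
    = (\<Sum>l\<le>n. (of_real ((s/2)^n / fact n) * of_nat (n choose l)) * (z^l * (inverse z)^(n-l) * z powi (d - 1)))"
    unfolding 1 scaleR_conv_of_real sum_distrib_left sum_distrib_right
    by (intro sum.cong refl) (simp only: divide_inverse of_real_mult mult_ac)
  also have "\<dots> = (\<Sum>l\<le>n. (of_real ((s/2)^n / fact n) * of_nat (n choose l)) * z powi (int l - int (n - l) + (d - 1)))"
    by (intro sum.cong refl) (simp only: pw_combine[OF assms])
  finally show ?thesis .
qed

lemma term_integral:
  "contour_integral (circlepath 0 1) (\<lambda>z. ((of_real s * (z + inverse z) / 2)^n /\<^sub>R fact n) * z powi (d - 1))
   = 2 * of_real pi * \<i> * (\<Sum>l\<le>n. if int l - int (n - l) + (d - 1) = -1 then of_real ((s/2)^n / fact n) * of_nat (n choose l) else 0)"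
proof -
  have "contour_integral (circlepath 0 1) (\<lambda>z. ((of_real s * (z + inverse z) / 2)^n /\<^sub>R fact n) * z powi (d - 1))
    = contour_integral (circlepath 0 1) (\<lambda>z. \<Sum>l\<le>n. (of_real ((s/2)^n / fact n) * of_nat (n choose l)) * z powi (int l - int (n - l) + (d - 1)))"
  proof (rule contour_integral_eq)
    fix z assume "z \<in> path_image (circlepath 0 1)"
    then have "z \<noteq> 0" by auto
    then show "((of_real s * (z + inverse z) / 2)^n /\<^sub>R fact n) * z powi (d - 1) = (\<Sum>l\<le>n. (of_real ((s/2)^n / fact n) * of_nat (n choose l)) * z powi (int l - int (n - l) + (d - 1)))"
      by (rule term_expand)
  qed
  also have "\<dots> = 2 * of_real pi * \<i> * (\<Sum>l\<le>n. if int l - int (n - l) + (d - 1) = -1 then of_real ((s/2)^n / fact n) * of_nat (n choose l) else 0)"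
    by (rule circ_sum_powi) simp
  finally show ?thesis .
qed

lemma moment_integral:
  fixes s :: real and d :: int
  shows "contour_integral (circlepath 0 1) (\<lambda>z. exp (of_real s * (z + inverse z) / 2) * z powi (d - 1))
       = 2 * of_real pi * \<i> * of_real (bessel_I (nat \<bar>d\<bar>) s)"
proof -
  define a where "a = nat \<bar>d\<bar>"
  define c where "c = (\<lambda>n. 2 * of_real pi * \<i> * (\<Sum>l\<le>n. if int l - int (n - l) + (d - 1) = -1 then of_real ((s/2)^n / fact n) * of_nat (n choose l) else (0::complex)))"
  define g where "g = (\<lambda>k::nat. a + 2 * k)"
  have csums: "c sums contour_integral (circlepath 0 1) (\<lambda>z. exp (of_real s * (z + inverse z) / 2) * z powi (d - 1))"
    using exp_circle_sums[of s d] unfolding c_def term_integral .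
  have sm: "strict_mono g" unfolding g_def by (rule strict_monoI) simp
  have zero: "c n = 0" if nr: "n \<notin> range g" for n
  proof -
    have "(if int l - int (n - l) + (d - 1) = -1 then of_real ((s/2)^n / fact n) * of_nat (n choose l) else (0::complex)) = 0"
      if l: "l \<in> {..n}" for l
    proof (rule ccontr)
      assume "\<not> ?thesis"
      then have e: "int l - int (n - l) + d = 0" by (auto split: if_splits)
      have "n \<in> range g"
      proof (cases "d \<ge> 0")
        case True
        then have "n = g l" using e l unfolding g_def a_def by auto
        then show ?thesis by blast
      next
        case False
        then have "n = g (l - a)" using e l unfolding g_def a_def by auto
        then show ?thesis by blast
      qed
      then show False using nr by blast
    qed
    then show ?thesis unfolding c_def by simp
  qed
  have cg: "c (g k) = 2 * of_real pi * \<i> * of_real (bterm a s k)" for k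
  proof -
    define l0 where "l0 = (if d \<ge> 0 then k else a + k)"
    have l0n: "l0 \<le> g k" unfolding l0_def g_def by auto
    have iff: "(int l - int (g k - l) + (d - 1) = -1) \<longleftrightarrow> l = l0" if "l \<le> g k" for l
      using that unfolding l0_def g_def a_def by auto
    have "(\<Sum>l\<le>g k. if int l - int (g k - l) + (d - 1) = -1 then of_real ((s/2)^(g k) / fact (g k)) * of_nat (g k choose l) else (0::complex))
        = (\<Sum>l\<le>g k. if l = l0 then of_real ((s/2)^(g k) / fact (g k)) * of_nat (g k choose l) else 0)"
      by (intro sum.cong refl, subst iff) auto
    also have "\<dots> = of_real ((s/2)^(g k) / fact (g k)) * of_nat (g k choose l0)"
      using l0n by simp
    also have "g k choose l0 = g k choose k"
      unfolding l0_def g_def using binomial_symmetric[of k "a + 2 * k"] by (auto simp: add.commute)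
    also have "of_real ((s/2)^(g k) / fact (g k)) * of_nat (g k choose k) = (of_real (bterm a s k) :: complex)"
    proof -
      have "real (g k choose k) = fact (g k) / (fact k * fact (g k - k))"
        by (rule binomial_fact) (simp add: g_def)
      moreover have "g k - k = k + a" by (simp add: g_def)
      ultimately have "(s/2)^(g k) / fact (g k) * real (g k choose k) = bterm a s k"
        unfolding bterm_def by (simp add: g_def mult.commute add.commute)
      then show ?thesis by (metis of_real_mult of_real_of_nat_eq)
    qed
    finally show ?thesis unfolding c_def by simp
  qed
  have "(\<lambda>k. c (g k)) sums (2 * of_real pi * \<i> * of_real (bessel_I a s))"
    unfolding cg by (intro sums_mult sums_of_real bessel_sums)
  then have "c sums (2 * of_real pi * \<i> * of_real (bessel_I a s))"
    using sums_mono_reindex[where f=c, OF sm zero] by blast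
  then show ?thesis using csums sums_unique2 a_def by metis
qed

lemma cnj_unit: "norm (z::complex) = 1 \<Longrightarrow> cnj z = inverse z"
proof -
  assume n: "norm z = 1"
  have "z * cnj z = 1" using complex_norm_square[of z] n by simp
  moreover have "z \<noteq> 0" using n by auto
  ultimately show ?thesis by (simp add: field_simps)
qed

lemma moment:
  "opuc_inner (opuc_weight s) (monom 1 j) (monom 1 k) = of_real (bessel_I (nat \<bar>int j - int k\<bar>) s / bessel_I 0 s)"
proof -
  define C where "C = inverse (\<i> * of_real (2 * pi * bessel_I 0 s))"
  let ?F = "\<lambda>z. exp (of_real s * (z + inverse z) / 2) * z powi ((int j - int k) - 1)"
  have "opuc_inner (opuc_weight s) (monom 1 j) (monom 1 k) = contour_integral (circlepath 0 1) (\<lambda>z. ?F z * C)"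
    unfolding opuc_inner_def
  proof (rule contour_integral_eq)
    fix z assume "z \<in> path_image (circlepath 0 1)"
    then have n: "norm z = 1" by simp
    then have nz: "z \<noteq> 0" by auto
    have "z^j * (inverse z)^k * z powi (-1) = z powi (int j - int k + (-1))"
      by (rule pw_combine[OF nz])
    then have p: "z^j * (inverse z)^k / z = z powi ((int j - int k) - 1)"
      by (simp add: power_int_minus divide_inverse)
    show "poly (monom 1 j) z * cnj (poly (monom 1 k) z) * opuc_weight s z / (\<i> * z) = ?F z * C"
    proof -
      have p2: "z powi ((int j - int k) - 1) = z^j / (z^k * z)"
        using p[symmetric] nz by (simp add: power_inverse divide_inverse mult_ac)
      show ?thesis
        unfolding p2 opuc_weight_def C_def poly_monom using n nz
        by (simp add: cnj_unit field_simps)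
    qed
  qed
  also have "\<dots> = contour_integral (circlepath 0 1) ?F * C"
    by (rule contour_integral_rmul, rule contour_integrable_continuous_circlepath)
       (auto intro!: continuous_intros)
  also have "\<dots> = 2 * of_real pi * \<i> * of_real (bessel_I (nat \<bar>int j - int k\<bar>) s) * C"
    by (simp only: moment_integral)
  also have "\<dots> = of_real (bessel_I (nat \<bar>int j - int k\<bar>) s / bessel_I 0 s)"
    using bessel_I0_ge1[of s] unfolding C_def by (simp add: field_simps)
  finally show ?thesis .
qed

lemma bterm_bound:
  assumes "\<bar>x\<bar> \<le> R"
  shows "\<bar>bterm b x k\<bar> \<le> (R/2)^b * (inverse (fact k) * ((R/2)^2)^k)"
proof -
  have R0: "0 \<le> R" using assms by linarith
  define A where "A = \<bar>x/2\<bar>^b * ((x/2)^2)^k / fact k"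
  have A0: "0 \<le> A" unfolding A_def by simp
  have sq: "(\<bar>x\<bar>/2)^2 = (x/2)^2" by (simp add: power2_eq_square)
  have e: "\<bar>bterm b x k\<bar> = A / fact (k+b)"
    unfolding A_def by (simp add: bterm_def power_add power_mult power_abs abs_mult sq)
  have "A / fact (k+b) \<le> A / 1"
    by (rule frac_le[OF A0 order.refl]) (simp_all add: fact_ge_1)
  also have "A / 1 = \<bar>x/2\<bar>^b * (inverse (fact k) * ((x/2)^2)^k)"
    unfolding A_def div_by_1 divide_inverse by (simp only: mult_ac inverse_1 mult_1_left)
  also have "\<dots> \<le> (R/2)^b * (inverse (fact k) * ((R/2)^2)^k)"
  proof -
    have h1: "\<bar>x/2\<bar> \<le> R/2" using assms by simp
    have "\<bar>x/2\<bar>^2 \<le> (R/2)^2" by (rule power_mono[OF h1]) simp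
    then have h2: "(x/2)^2 \<le> (R/2)^2" using sq by simp
    have h3: "\<bar>x/2\<bar>^b \<le> (R/2)^b" by (rule power_mono[OF h1]) simp
    have h4: "((x/2)^2)^k \<le> ((R/2)^2)^k" by (rule power_mono[OF h2]) simp
    show ?thesis
      by (intro mult_mono mult_left_mono h3 h4) (use R0 in auto)
  qed
  finally show ?thesis unfolding e .
qed

lemma bterm_bound_summable: "summable (\<lambda>k. ((R::real)/2)^b * (inverse (fact k) * ((R/2)^2)^k))"
  by (intro summable_mult summable_exp)

definition bu :: "nat \<Rightarrow> nat \<Rightarrow> real \<Rightarrow> real" where
  "bu a k x = (if k = 0 then 0 else bterm (a+1) x (k-1))"
definition bv :: "nat \<Rightarrow> nat \<Rightarrow> real \<Rightarrow> real" where
  "bv a k x = (if a \<ge> 1 then bterm (a-1) x k else bu a k x)"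

lemma cancel3: "(c::real) \<noteq> 0 \<Longrightarrow> c * P / (c * A * B) = P / (A * B)"
  by simp

lemma cancel3': "(c::real) \<noteq> 0 \<Longrightarrow> c * P / (A * (c * B)) = P / (A * B)"
  by simp

lemma bu_eq: "bu a k x = of_nat k * (x/2)^(2*k+a-1) / (fact k * fact (k+a))"
proof (cases k)
  case 0 then show ?thesis by (simp add: bu_def)
next
  case (Suc j)
  have e1: "2 * k + a - 1 = 2 * j + (a + 1)" using Suc by simp
  have e3: "(fact k :: real) = of_nat k * fact j" using Suc by (simp add: fact_Suc)
  have e4: "k + a = j + (a + 1)" using Suc by simp
  have "bu a k x = (x/2)^(2*j+(a+1)) / (fact j * fact (j+(a+1)))"
    using Suc by (simp add: bu_def bterm_def)
  also have "\<dots> = of_nat k * (x/2)^(2*j+(a+1)) / (of_nat k * fact j * fact (j+(a+1)))"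
    by (rule cancel3[symmetric]) (simp add: Suc)
  finally show ?thesis unfolding e1 e3 e4 .
qed

lemma bv_eq: "bv a k x = of_nat (k+a) * (x/2)^(2*k+a-1) / (fact k * fact (k+a))"
proof (cases a)
  case 0 then show ?thesis by (simp add: bv_def bu_eq)
next
  case (Suc b)
  have e1: "2 * k + a - 1 = 2 * k + b" using Suc by simp
  have e2: "fact (k + a) = (of_nat (k + a) :: real) * fact (k + b)" using Suc by (simp add: fact_Suc)
  have "bv a k x = (x/2)^(2*k+b) / (fact k * fact (k+b))"
    using Suc by (simp add: bv_def bterm_def)
  also have "\<dots> = of_nat (k+a) * (x/2)^(2*k+b) / (fact k * (of_nat (k+a) * fact (k+b)))"
    by (rule cancel3'[symmetric]) (simp add: Suc)
  finally show ?thesis unfolding e1 e2 .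
qed

lemma bterm_deriv: "((\<lambda>x. bterm a x k) has_real_derivative (bu a k x + bv a k x)/2) (at x)"
proof -
  define F :: real where "F = fact k * fact (k+a)"
  define P where "P = (x/2)^(2*k+a-1)"
  have F0: "F \<noteq> 0" unfolding F_def by simp
  have d: "((\<lambda>x. (x/2)^(2*k+a) / F) has_real_derivative
     (of_nat (2*k+a) * (x/2)^(2*k+a-1) * (1/2)) / F) (at x)"
    by (auto intro!: derivative_eq_intros simp: F0)
  have e: "(of_nat (2*k+a) * (x/2)^(2*k+a-1) * (1/2)) / F = (bu a k x + bv a k x)/2"
    unfolding bu_eq bv_eq F_def[symmetric] P_def[symmetric] using F0 by (simp add: field_simps)
  from d[unfolded e] show ?thesis unfolding bterm_def F_def .
qed

lemma bu_sums: "(\<lambda>k. bu a k x) sums bessel_I (a+1) x"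
proof -
  have "(\<lambda>k. bu a (Suc k) x) sums bessel_I (a+1) x"
    unfolding bu_def by (simp add: bessel_sums)
  then show ?thesis by (subst (asm) sums_Suc_iff) (simp add: bu_def)
qed

lemma bv_sums: "(\<lambda>k. bv a k x) sums bessel_I (if a = 0 then 1 else a - 1) x"
proof (cases "a = 0")
  case True
  then show ?thesis using bu_sums[of 0 x] by (simp add: bv_def)
next
  case False
  then show ?thesis by (simp add: bv_def bessel_sums)
qed

lemma bessel_deriv:
  "(bessel_I a has_real_derivative (bessel_I (a+1) x + bessel_I (if a = 0 then 1 else a - 1) x)/2) (at x)"
proof -
  define R where "R = \<bar>x\<bar> + 1"
  define S where "S = ball (0::real) R"
  define M where "M = (\<lambda>b k. (R/2)^b * (inverse (fact k) * ((R/2)^2)^k))"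
  define Mu where "Mu = (\<lambda>k. if k = 0 then 0 else M (a+1) (k-1))"
  define Mv where "Mv = (\<lambda>k. if a \<ge> 1 then M (a-1) k else Mu k)"
  have sM: "summable (M b)" for b unfolding M_def by (rule bterm_bound_summable)
  have sMu: "summable Mu"
    by (subst summable_Suc_iff[symmetric]) (simp add: Mu_def sM)
  have sMv: "summable Mv"
  proof (cases "a \<ge> 1")
    case True then show ?thesis unfolding Mv_def using sM by simp
  next
    case False then show ?thesis unfolding Mv_def using sMu by simp
  qed
  have bu_b: "\<bar>bu a k y\<bar> \<le> Mu k" if "y \<in> S" for k y
  proof -
    have "\<bar>y\<bar> \<le> R" using that unfolding S_def by auto
    note bb = bterm_bound[OF this]
    show ?thesis
    proof (cases "k = 0")
      case True then show ?thesis by (simp add: bu_def Mu_def)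
    next
      case False
      have "bu a k y = bterm (a+1) y (k-1)" using False by (simp only: bu_def if_False)
      moreover have "Mu k = M (a+1) (k-1)" using False by (simp only: Mu_def if_False)
      ultimately show ?thesis unfolding M_def using bb by presburger
    qed
  qed
  have bv_b: "\<bar>bv a k y\<bar> \<le> Mv k" if "y \<in> S" for k y
  proof -
    have "\<bar>y\<bar> \<le> R" using that unfolding S_def by auto
    note bb = bterm_bound[OF this]
    show ?thesis
    proof (cases "a \<ge> 1")
      case True
      have "bv a k y = bterm (a-1) y k" using True by (simp only: bv_def if_True)
      moreover have "Mv k = M (a-1) k" using True by (simp only: Mv_def if_True)
      ultimately show ?thesis unfolding M_def using bb by presburger
    next
      case False
      have "bv a k y = bu a k y" using False by (simp only: bv_def if_False)
      moreover have "Mv k = Mu k" using False by (simp only: Mv_def if_False)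
      ultimately show ?thesis using bu_b[OF that] by presburger
    qed
  qed
  have "uniform_limit S (\<lambda>n y. \<Sum>i<n. (bu a i y + bv a i y)/2) (\<lambda>y. suminf (\<lambda>i. (bu a i y + bv a i y)/2)) sequentially"
  proof (rule Weierstrass_m_test_ev)
    show "summable (\<lambda>k. (Mu k + Mv k)/2)" by (intro summable_divide summable_add sMu sMv)
    show "\<forall>\<^sub>F n in sequentially. \<forall>y\<in>S. norm ((bu a n y + bv a n y)/2) \<le> (Mu n + Mv n)/2"
    proof (rule always_eventually, intro allI ballI)
      fix n y assume y: "y \<in> S"
      have "norm ((bu a n y + bv a n y)/2) \<le> (\<bar>bu a n y\<bar> + \<bar>bv a n y\<bar>)/2" by simp
      also have "\<dots> \<le> (Mu n + Mv n)/2" using bu_b[OF y, of n] bv_b[OF y, of n] by simp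
      finally show "norm ((bu a n y + bv a n y)/2) \<le> (Mu n + Mv n)/2" .
    qed
  qed
  then have uc: "uniformly_convergent_on S (\<lambda>n y. \<Sum>i<n. (bu a i y + bv a i y)/2)"
    unfolding uniformly_convergent_on_def by blast
  have xS: "x \<in> interior S" unfolding S_def R_def by simp
  have "((\<lambda>y. \<Sum>n. bterm a y n) has_field_derivative (\<Sum>n. (bu a n x + bv a n x)/2)) (at x)"
  proof (rule has_field_derivative_series'(2)[OF _ _ uc _ _ xS])
    show "convex S" unfolding S_def by simp
    show "0 \<in> S" unfolding S_def R_def by simp
    show "summable (\<lambda>n. bterm a 0 n)" by (rule bessel_summable)
    show "\<And>n y. y \<in> S \<Longrightarrow> ((\<lambda>y. bterm a y n) has_field_derivative (bu a n y + bv a n y)/2) (at y within S)"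
      by (rule has_field_derivative_at_within, rule bterm_deriv)
  qed
  moreover have "(\<lambda>y. \<Sum>n. bterm a y n) = bessel_I a" by (rule ext) (simp add: bessel_I_bterm)
  moreover have "(\<Sum>n. (bu a n x + bv a n x)/2) = (bessel_I (a+1) x + bessel_I (if a = 0 then 1 else a - 1) x)/2"
    by (rule sums_unique[symmetric], intro sums_divide sums_add bu_sums bv_sums)
  ultimately show ?thesis by simp
qed

definition gr :: "real \<Rightarrow> int \<Rightarrow> real" where
  "gr s d = bessel_I (nat \<bar>d\<bar>) s / bessel_I 0 s"

definition gg :: "real \<Rightarrow> int \<Rightarrow> complex" where
  "gg s d = of_real (gr s d)"

lemma gr0 [simp]: "gr s 0 = 1"
  using bessel_I0_ge1[of s] by (simp add: gr_def)

lemma gr_sym: "gr s (-d) = gr s d" by (simp add: gr_def)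
lemma gg_sym: "gg s (-d) = gg s d" by (simp add: gg_def gr_sym)
lemma gg_cnj [simp]: "cnj (gg s d) = gg s d" by (simp add: gg_def)

lemma gr_deriv:
  "((\<lambda>s. gr s d) has_real_derivative ((gr x (d+1) + gr x (d-1))/2 - gr x 1 * gr x d)) (at x)"
proof -
  define a where "a = nat \<bar>d\<bar>"
  have I0: "bessel_I 0 x \<noteq> 0" using bessel_I0_ge1[of x] by simp
  have sumeq: "bessel_I (a+1) x + bessel_I (if a = 0 then 1 else a - 1) x
      = bessel_I (nat \<bar>d+1\<bar>) x + bessel_I (nat \<bar>d-1\<bar>) x"
  proof (cases "d \<ge> 1")
    case True
    then have e1: "nat \<bar>d+1\<bar> = a + 1" and e2: "nat \<bar>d-1\<bar> = a - 1" and e3: "a \<noteq> 0" unfolding a_def by auto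
    show ?thesis unfolding e1 e2 using e3 by simp
  next
    case False
    show ?thesis
    proof (cases "d = 0")
      case True then show ?thesis unfolding a_def by simp
    next
      case False2: False
      with False have e1: "nat \<bar>d+1\<bar> = a - 1" and e2: "nat \<bar>d-1\<bar> = a + 1" and e3: "a \<noteq> 0" unfolding a_def by auto
      show ?thesis unfolding e1 e2 using e3 by simp
    qed
  qed
  have d0: "(bessel_I 0 has_real_derivative bessel_I 1 x) (at x)"
    using bessel_deriv[of 0 x] by simp
  have da: "(bessel_I a has_real_derivative (bessel_I (a+1) x + bessel_I (if a = 0 then 1 else a - 1) x)/2) (at x)"
    by (rule bessel_deriv)
  have "((\<lambda>s. bessel_I a s / bessel_I 0 s) has_real_derivative
      ((bessel_I (a+1) x + bessel_I (if a = 0 then 1 else a - 1) x)/2 * bessel_I 0 x - bessel_I a x * bessel_I 1 x) / (bessel_I 0 x * bessel_I 0 x)) (at x)"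
    by (rule DERIV_divide[OF da d0 I0])
  moreover have "((bessel_I (a+1) x + bessel_I (if a = 0 then 1 else a - 1) x)/2 * bessel_I 0 x - bessel_I a x * bessel_I 1 x) / (bessel_I 0 x * bessel_I 0 x)
     = (gr x (d+1) + gr x (d-1))/2 - gr x 1 * gr x d"
  proof -
    have "((bessel_I (a+1) x + bessel_I (if a = 0 then 1 else a - 1) x)/2 * bessel_I 0 x - bessel_I a x * bessel_I 1 x) / (bessel_I 0 x * bessel_I 0 x)
      = ((bessel_I (nat \<bar>d+1\<bar>) x + bessel_I (nat \<bar>d-1\<bar>) x)/2 * bessel_I 0 x - bessel_I a x * bessel_I 1 x) / (bessel_I 0 x * bessel_I 0 x)"
      by (simp only: sumeq)
    also have "\<dots> = (gr x (d+1) + gr x (d-1))/2 - gr x 1 * gr x d"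
      unfolding gr_def a_def using I0 by (simp add: field_simps)
    finally show ?thesis .
  qed
  ultimately show ?thesis unfolding gr_def a_def by simp
qed

lemma gg_deriv:
  "((\<lambda>s. gg s d) has_vector_derivative ((gg x (d+1) + gg x (d-1))/2 - gg x 1 * gg x d)) (at x)"
proof -
  have "((\<lambda>s. complex_of_real (gr s d)) has_vector_derivative complex_of_real ((gr x (d+1) + gr x (d-1))/2 - gr x 1 * gr x d)) (at x)"
    by (rule has_vector_derivative_of_real[OF gr_deriv])
  then show ?thesis unfolding gg_def by simp
qed

definition Bi :: "real \<Rightarrow> complex poly \<Rightarrow> complex poly \<Rightarrow> complex" where
  "Bi s p q = (\<Sum>j\<le>degree p. \<Sum>k\<le>degree q. coeff p j * cnj (coeff q k) * gg s (int j - int k))"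

lemma moment_gg: "opuc_inner (opuc_weight s) (monom 1 j) (monom 1 k) = gg s (int j - int k)"
  unfolding moment gg_def gr_def ..

lemma opuc_Bi: "opuc_inner (opuc_weight s) p q = Bi s p q"
proof -
  let ?M = "\<lambda>j k \<zeta>. poly (monom 1 j) \<zeta> * cnj (poly (monom 1 k) \<zeta>) * opuc_weight s \<zeta> / (\<i> * \<zeta>)"
  have intM: "?M j k contour_integrable_on circlepath 0 1" for j k
    unfolding opuc_weight_def poly_monom using bessel_I0_ge1[of s]
    by (intro contour_integrable_continuous_circlepath) (auto intro!: continuous_intros)
  have hM: "((\<lambda>\<zeta>. (coeff p j * cnj (coeff q k)) * ?M j k \<zeta>) has_contour_integral
      (coeff p j * cnj (coeff q k)) * gg s (int j - int k)) (circlepath 0 1)" for j k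
  proof -
    have "(?M j k has_contour_integral gg s (int j - int k)) (circlepath 0 1)"
      using has_contour_integral_integral[OF intM[of j k]] moment_gg[of s j k]
      unfolding opuc_inner_def by simp
    then show ?thesis by (rule has_contour_integral_lmul)
  qed
  have "((\<lambda>\<zeta>. \<Sum>j\<le>degree p. \<Sum>k\<le>degree q. (coeff p j * cnj (coeff q k)) * ?M j k \<zeta>) has_contour_integral
        (\<Sum>j\<le>degree p. \<Sum>k\<le>degree q. (coeff p j * cnj (coeff q k)) * gg s (int j - int k))) (circlepath 0 1)"
    by (intro has_contour_integral_sum hM) auto
  then have h: "((\<lambda>\<zeta>. poly p \<zeta> * cnj (poly q \<zeta>) * opuc_weight s \<zeta> / (\<i> * \<zeta>)) has_contour_integral (\<Sum>j\<le>degree p. \<Sum>k\<le>degree q. (coeff p j * cnj (coeff q k)) * gg s (int j - int k))) (circlepath 0 1)"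
  proof (rule has_contour_integral_eq)
    fix \<zeta> :: complex
    show "(\<Sum>j\<le>degree p. \<Sum>k\<le>degree q. (coeff p j * cnj (coeff q k)) * ?M j k \<zeta>) = poly p \<zeta> * cnj (poly q \<zeta>) * opuc_weight s \<zeta> / (\<i> * \<zeta>)"
      unfolding poly_altdef[of p] poly_altdef[of q] poly_monom
      by (simp add: sum_distrib_left sum_distrib_right sum_divide_distrib cnj_sum mult_ac, rule sum.swap)
  qed
  then show ?thesis unfolding opuc_inner_def Bi_def by (rule contour_integral_unique)
qed

lemma Bi_ext:
  assumes "degree p \<le> N" "degree q \<le> M"
  shows "Bi s p q = (\<Sum>j\<le>N. \<Sum>k\<le>M. coeff p j * cnj (coeff q k) * gg s (int j - int k))"
proof -
  have inner: "(\<Sum>k\<le>degree q. coeff p j * cnj (coeff q k) * gg s (int j - int k))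
      = (\<Sum>k\<le>M. coeff p j * cnj (coeff q k) * gg s (int j - int k))" for j
    by (rule sum.mono_neutral_left) (use assms in \<open>auto simp: coeff_eq_0\<close>)
  have "Bi s p q = (\<Sum>j\<le>degree p. \<Sum>k\<le>M. coeff p j * cnj (coeff q k) * gg s (int j - int k))"
    unfolding Bi_def inner ..
  also have "\<dots> = (\<Sum>j\<le>N. \<Sum>k\<le>M. coeff p j * cnj (coeff q k) * gg s (int j - int k))"
    by (rule sum.mono_neutral_left) (use assms in \<open>auto simp: coeff_eq_0\<close>)
  finally show ?thesis .
qed

lemma Bi_add1: "Bi s (p + q) r = Bi s p r + Bi s q r"
proof -
  define N where "N = max (degree p) (degree q)"
  have d: "degree p \<le> N" "degree q \<le> N" "degree (p + q) \<le> N"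
    unfolding N_def by (auto intro: degree_add_le)
  show ?thesis
    unfolding Bi_ext[OF d(1) order.refl] Bi_ext[OF d(2) order.refl] Bi_ext[OF d(3) order.refl]
    by (simp add: distrib_right sum.distrib)
qed

lemma Bi_smult1: "Bi s (smult c p) q = c * Bi s p q"
proof -
  have d: "degree (smult c p) \<le> degree p" by (rule degree_smult_le)
  show ?thesis
    unfolding Bi_ext[OF d order.refl] Bi_def
    by (simp add: sum_distrib_left mult_ac)
qed

lemma Bi_zero1 [simp]: "Bi s 0 q = 0"
  using Bi_smult1[of s 0 0 q] by simp

lemma Bi_conj: "Bi s q p = cnj (Bi s p q)"
  unfolding Bi_def cnj_sum
  by (subst sum.swap) (simp add: mult_ac gg_sym[of s "int _ - int _", simplified, symmetric])

lemma Bi_add2: "Bi s r (p + q) = Bi s r p + Bi s r q"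
  by (metis Bi_conj Bi_add1 complex_cnj_add)

lemma Bi_smult2: "Bi s p (smult c q) = cnj c * Bi s p q"
  by (metis Bi_conj Bi_smult1 complex_cnj_mult)

lemma Bi_zero2 [simp]: "Bi s q 0 = 0"
  by (metis Bi_conj Bi_zero1 complex_cnj_zero)

lemma Bi_minus1: "Bi s (- p) q = - Bi s p q"
  using Bi_smult1[of s "-1" p q] by simp

lemma Bi_minus2: "Bi s q (- p) = - Bi s q p"
  using Bi_smult2[of s q "-1" p] by simp

lemma Bi_diff1: "Bi s (p - q) r = Bi s p r - Bi s q r"
  using Bi_add1[of s p "-q" r] Bi_minus1[of s q r] by simp

lemma Bi_diff2: "Bi s r (p - q) = Bi s r p - Bi s r q"
  using Bi_add2[of s r p "-q"] Bi_minus2[of s r q] by simp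

lemma Bi_sum1: "Bi s (\<Sum>i\<in>A. f i) q = (\<Sum>i\<in>A. Bi s (f i) q)"
proof (cases "finite A")
  case True then show ?thesis
    by (induction A rule: finite_induct) (simp_all add: Bi_add1)
qed simp

lemma Bi_sum2: "Bi s q (\<Sum>i\<in>A. f i) = (\<Sum>i\<in>A. Bi s q (f i))"
  by (subst Bi_conj) (simp add: Bi_sum1 cnj_sum Bi_conj[of s q])

lemma Bi_shift: "Bi s (pCons 0 p) (pCons 0 q) = Bi s p q"
proof -
  have d1: "degree (pCons 0 p) \<le> Suc (degree p)" by (simp add: degree_pCons_le)
  have d2: "degree (pCons 0 q) \<le> Suc (degree q)" by (simp add: degree_pCons_le)
  show ?thesis
    unfolding Bi_ext[OF d1 d2] Bi_def
    by (simp add: sum.atMost_Suc_shift del: sum.atMost_Suc)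
qed

lemma Bi_cnjpoly: "Bi s (map_poly cnj p) (map_poly cnj q) = cnj (Bi s p q)"
proof -
  have d1: "degree (map_poly cnj p) \<le> degree p" by (simp add: degree_map_poly)
  have d2: "degree (map_poly cnj q) \<le> degree q" by (simp add: degree_map_poly)
  show ?thesis
    unfolding Bi_ext[OF d1 d2] Bi_def
    by (simp add: coeff_map_poly cnj_sum degree_map_poly)
qed

lemma Bi_const: "Bi s [:a:] [:b:] = a * cnj b"
  by (simp add: Bi_def gg_def)

locale onf =
  fixes s :: real and \<phi> :: "nat \<Rightarrow> complex poly"
  assumes deg: "degree (\<phi> n) = n"
    and lcR: "lead_coeff (\<phi> n) \<in> \<real>"
    and lcpos: "Re (lead_coeff (\<phi> n)) > 0"
    and orth: "Bi s (\<phi> m) (\<phi> n) = (if m = n then 1 else 0)"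
begin

definition \<kappa> where "\<kappa> n = lead_coeff (\<phi> n)"

lemma kappa_coeff: "coeff (\<phi> n) n = \<kappa> n"
  unfolding \<kappa>_def using deg[of n] by simp

lemma kappa_nz: "\<kappa> n \<noteq> 0"
  using lcpos[of n] unfolding \<kappa>_def by auto

lemma kappa_cnj: "cnj (\<kappa> n) = \<kappa> n"
  using lcR[of n] unfolding \<kappa>_def by (simp add: Reals_cnj_iff)

lemma orth_same: "Bi s (\<phi> n) (\<phi> n) = 1" using orth by simp
lemma orth_diff: "m \<noteq> n \<Longrightarrow> Bi s (\<phi> m) (\<phi> n) = 0" using orth by simp

lemma degree_drop:
  assumes "degree (q::complex poly) \<le> Suc n" "coeff q (Suc n) = 0"
  shows "degree q \<le> n"
proof (rule degree_le, intro allI impI)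
  fix i assume "n < i"
  then show "coeff q i = 0"
    using assms by (cases "i = Suc n") (auto intro: coeff_eq_0)
qed

lemma expand: "degree p \<le> n \<Longrightarrow> p = (\<Sum>m\<le>n. smult (Bi s p (\<phi> m)) (\<phi> m))"
proof (induction n arbitrary: p)
  case 0
  obtain c where p: "p = [:c:]" using 0 by (metis degree_0_id le_zero_eq)
  have f: "\<phi> 0 = [:\<kappa> 0:]" using deg[of 0] kappa_coeff[of 0] by (metis degree_0_id)
  have k: "\<kappa> 0 * cnj (\<kappa> 0) = 1" using orth_same[of 0] f by (simp add: Bi_const)
  have "smult (Bi s p (\<phi> 0)) (\<phi> 0) = [:c * (\<kappa> 0 * cnj (\<kappa> 0)):]"
    unfolding p f by (simp add: Bi_const mult_ac)
  then show ?case using k p by simp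
next
  case (Suc n)
  define a where "a = coeff p (Suc n) / \<kappa> (Suc n)"
  define p' where "p' = p - smult a (\<phi> (Suc n))"
  have "coeff p' (Suc n) = 0"
    unfolding p'_def a_def using kappa_nz[of "Suc n"] by (simp add: kappa_coeff)
  moreover have "degree p' \<le> Suc n"
  proof -
    have d1: "degree (smult a (\<phi> (Suc n))) \<le> Suc n" by (metis degree_smult_le deg)
    have "degree p' \<le> max (degree p) (degree (smult a (\<phi> (Suc n))))" unfolding p'_def by (rule degree_diff_le_max)
    then show ?thesis using d1 Suc.prems by simp
  qed
  ultimately have dp': "degree p' \<le> n" by (rule degree_drop[rotated])
  have IH: "p' = (\<Sum>m\<le>n. smult (Bi s p' (\<phi> m)) (\<phi> m))" by (rule Suc.IH[OF dp'])
  have B0: "Bi s p' (\<phi> (Suc n)) = 0"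
    by (subst IH) (simp add: Bi_sum1 Bi_smult1 orth)
  have pp: "p = p' + smult a (\<phi> (Suc n))" unfolding p'_def by simp
  have c1: "Bi s p (\<phi> m) = Bi s p' (\<phi> m)" if "m \<le> n" for m
    using that unfolding pp by (simp add: Bi_add1 Bi_smult1 orth)
  have c2: "Bi s p (\<phi> (Suc n)) = a"
    unfolding pp by (simp add: Bi_add1 Bi_smult1 orth B0)
  have "(\<Sum>m\<le>Suc n. smult (Bi s p (\<phi> m)) (\<phi> m)) = (\<Sum>m\<le>n. smult (Bi s p' (\<phi> m)) (\<phi> m)) + smult a (\<phi> (Suc n))"
    by (simp add: c1 c2)
  also have "\<dots> = p" using IH pp by simp
  finally show ?case by simp
qed

lemma vanish: "degree p \<le> n \<Longrightarrow> (\<And>m. m \<le> n \<Longrightarrow> Bi s p (\<phi> m) = 0) \<Longrightarrow> p = 0"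
  by (subst expand[of p n]) simp_all

lemma orth_low: "degree p < n \<Longrightarrow> Bi s p (\<phi> n) = 0"
proof -
  assume d: "degree p < n"
  then obtain N where N: "n = Suc N" "degree p \<le> N" by (cases n) auto
  show ?thesis
    by (subst expand[OF N(2)]) (use N in \<open>simp add: Bi_sum1 Bi_smult1 orth\<close>)
qed

lemma orth_low2: "degree p < n \<Longrightarrow> Bi s (\<phi> n) p = 0"
  by (subst Bi_conj) (simp add: orth_low)

lemma coeff_sum_poly: "coeff (\<Sum>m\<in>A. f m) i = (\<Sum>m\<in>A. coeff (f m) i)"
  by (induction A rule: infinite_finite_induct) auto

lemma lead_inner: "degree p \<le> n \<Longrightarrow> Bi s p (\<phi> n) = coeff p n / \<kappa> n"
proof -
  assume d: "degree p \<le> n"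
  have "coeff p n = (\<Sum>m\<le>n. Bi s p (\<phi> m) * coeff (\<phi> m) n)"
    by (subst expand[OF d]) (simp add: coeff_sum_poly)
  also have "\<dots> = (\<Sum>m\<le>n. if m = n then Bi s p (\<phi> n) * \<kappa> n else 0)"
  proof (intro sum.cong refl)
    fix m assume "m \<in> {..n}"
    then show "Bi s p (\<phi> m) * coeff (\<phi> m) n = (if m = n then Bi s p (\<phi> n) * \<kappa> n else 0)"
      using deg[of m] by (auto simp: kappa_coeff coeff_eq_0)
  qed
  also have "\<dots> = Bi s p (\<phi> n) * \<kappa> n" by simp
  finally show ?thesis using kappa_nz[of n] by (simp add: field_simps)
qed

lemma lead_inner2: "degree p \<le> n \<Longrightarrow> Bi s (\<phi> n) p = cnj (coeff p n) / \<kappa> n"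
  by (subst Bi_conj) (simp add: lead_inner kappa_cnj)

end

lemma onf_unique:
  assumes A: "onf s \<phi>" and B: "onf s \<psi>"
  shows "\<psi> n = \<phi> n"
proof (induction n rule: less_induct)
  case (less n)
  interpret A: onf s \<phi> by (rule A)
  interpret B: onf s \<psi> by (rule B)
  have "\<psi> n = (\<Sum>m\<le>n. smult (Bi s (\<psi> n) (\<phi> m)) (\<phi> m))"
    by (rule A.expand) (simp add: B.deg)
  also have "\<dots> = (\<Sum>m\<le>n. if m = n then smult (Bi s (\<psi> n) (\<phi> n)) (\<phi> n) else 0)"
  proof (intro sum.cong refl)
    fix m assume "m \<in> {..n}"
    show "smult (Bi s (\<psi> n) (\<phi> m)) (\<phi> m) = (if m = n then smult (Bi s (\<psi> n) (\<phi> n)) (\<phi> n) else 0)"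
    proof (cases "m = n")
      case False
      then have "m < n" using \<open>m \<in> {..n}\<close> by auto
      then have "\<phi> m = \<psi> m" using less by simp
      then show ?thesis using False by (simp add: B.orth)
    qed simp
  qed
  also have "\<dots> = smult (Bi s (\<psi> n) (\<phi> n)) (\<phi> n)" by simp
  finally have e: "\<psi> n = smult (Bi s (\<psi> n) (\<phi> n)) (\<phi> n)" .
  define c where "c = Bi s (\<psi> n) (\<phi> n)"
  have lc: "B.\<kappa> n = c * A.\<kappa> n"
    using arg_cong[OF e, of "\<lambda>p. coeff p n"] unfolding c_def by (simp add: A.kappa_coeff B.kappa_coeff)
  have "1 = Bi s (\<psi> n) (\<psi> n)" by (simp add: B.orth)
  also have "\<dots> = c * cnj c" by (subst (1 2) e) (simp add: Bi_smult1 Bi_smult2 A.orth c_def)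
  finally have cc: "c * cnj c = 1" by simp
  obtain ka where ka: "A.\<kappa> n = of_real ka" using A.lcR unfolding A.\<kappa>_def by (auto elim!: Reals_cases)
  obtain kb where kb: "B.\<kappa> n = of_real kb" using B.lcR unfolding B.\<kappa>_def by (auto elim!: Reals_cases)
  have kapos: "ka > 0" using A.lcpos[of n] ka unfolding A.\<kappa>_def by simp
  have kbpos: "kb > 0" using B.lcpos[of n] kb unfolding B.\<kappa>_def by simp
  define r where "r = kb / ka"
  have rpos: "r > 0" unfolding r_def using kapos kbpos by simp
  have cr: "c = of_real r" using lc ka kb kapos unfolding r_def by (simp add: field_simps)
  have rr: "r * r = 1" using cc cr by (metis complex_cnj_complex_of_real of_real_eq_1_iff of_real_mult)
  have "(r - 1) * (r + 1) = 0" using rr by (simp add: algebra_simps)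
  then have "r = 1" using rpos by simp
  then have "c = 1" using cr by simp
  then show ?case using e unfolding c_def by simp
qed

lemma if10_mult: "(if P then 1 else 0) * (x::complex) = (if P then x else 0)" by simp
lemma if10_mult2: "x * (if P then 1 else 0) = (if P then (x::complex) else 0)" by simp
lemma if0_mult: "(if P then x else 0) * y = (if P then x * y else (0::complex))" by simp
lemma cnj_if10: "cnj (if P then 1 else 0) = (if P then 1 else 0)" by simp

context onf begin

lemma onf_cnj: "onf s (\<lambda>n. map_poly cnj (\<phi> n))"
proof
  fix n m
  have dg: "degree (map_poly cnj (\<phi> n)) = n" by (simp add: degree_map_poly deg)
  have lc: "lead_coeff (map_poly cnj (\<phi> n)) = \<kappa> n"
    unfolding dg by (simp add: coeff_map_poly kappa_coeff kappa_cnj)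
  show "degree (map_poly cnj (\<phi> n)) = n" by (rule dg)
  show "lead_coeff (map_poly cnj (\<phi> n)) \<in> \<real>" unfolding lc \<kappa>_def by (rule lcR)
  show "0 < Re (lead_coeff (map_poly cnj (\<phi> n)))" unfolding lc \<kappa>_def by (rule lcpos)
  show "Bi s (map_poly cnj (\<phi> m)) (map_poly cnj (\<phi> n)) = (if m = n then 1 else 0)"
    by (simp add: Bi_cnjpoly orth)
qed

lemma real_poly: "map_poly cnj (\<phi> n) = \<phi> n"
  by (rule onf_unique[OF onf_axioms onf_cnj])

lemma coeff_real: "cnj (coeff (\<phi> n) j) = coeff (\<phi> n) j"
  using arg_cong[OF real_poly[of n], of "\<lambda>p. coeff p j"] by (simp add: coeff_map_poly)

lemma Bi_real:
  assumes "map_poly cnj p = p" "map_poly cnj q = q"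
  shows "cnj (Bi s p q) = Bi s p q"
  using Bi_cnjpoly[of s p q] assms by simp

definition \<rho> where "\<rho> n = reflect_poly (\<phi> n)"

lemma deg_rho: "degree (\<rho> n) \<le> n"
  unfolding \<rho>_def using degree_reflect_poly_le[of "\<phi> n"] deg[of n] by simp

lemma coeff_rho: "i \<le> n \<Longrightarrow> coeff (\<rho> n) i = coeff (\<phi> n) (n - i)"
  unfolding \<rho>_def by (simp add: coeff_reflect_poly deg)

lemma rho0: "coeff (\<rho> n) 0 = \<kappa> n"
  unfolding \<rho>_def \<kappa>_def by simp

lemma Bi_monom_rho:
  assumes "k \<le> n"
  shows "Bi s (monom 1 k) (\<rho> n) = Bi s (\<phi> n) (monom 1 (n - k))"
proof -
  have dm: "degree (monom (1::complex) k) \<le> k" by (simp add: degree_monom_le)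
  have dm2: "degree (monom (1::complex) (n-k)) \<le> n - k" by (simp add: degree_monom_le)
  have "Bi s (monom 1 k) (\<rho> n) = (\<Sum>j\<le>k. \<Sum>i\<le>n. coeff (monom 1 k) j * cnj (coeff (\<rho> n) i) * gg s (int j - int i))"
    by (rule Bi_ext[OF dm deg_rho])
  also have "\<dots> = (\<Sum>i\<le>n. cnj (coeff (\<rho> n) i) * gg s (int k - int i))"
    by (subst sum.swap) (simp add: coeff_monom if10_mult if0_mult)
  also have "\<dots> = (\<Sum>i\<le>n. coeff (\<phi> n) (n - i) * gg s (int k - int i))"
    by (intro sum.cong refl) (simp add: coeff_rho coeff_real)
  also have "\<dots> = (\<Sum>i=0..n. coeff (\<phi> n) (n - i) * gg s (int k - int i))"
    by (simp add: atLeast0AtMost)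
  also have "\<dots> = (\<Sum>j=0..n. coeff (\<phi> n) j * gg s (int j - int (n - k)))"
  proof (subst sum.atLeastAtMost_rev, intro sum.cong refl)
    fix j assume "j \<in> {0..n}"
    then show "coeff (\<phi> n) (n - (n + 0 - j)) * gg s (int k - int (n + 0 - j)) = coeff (\<phi> n) j * gg s (int j - int (n - k))"
    proof -
      have e1: "int k - int (n + 0 - j) = int j - int (n - k)" using assms \<open>j \<in> {0..n}\<close> by auto
      have e2: "n - (n + 0 - j) = j" using \<open>j \<in> {0..n}\<close> by auto
      show ?thesis by (simp only: e1 e2)
    qed
  qed
  also have "\<dots> = (\<Sum>j\<le>n. \<Sum>i\<le>n-k. coeff (\<phi> n) j * cnj (coeff (monom 1 (n - k)) i) * gg s (int j - int i))"
    by (simp add: atLeast0AtMost coeff_monom cnj_if10 if10_mult2 if10_mult if0_mult)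
  also have "\<dots> = Bi s (\<phi> n) (monom 1 (n - k))"
    by (rule Bi_ext[symmetric]) (simp_all add: deg dm2)
  finally show ?thesis .
qed

end

context onf begin

lemma rho_repr:
  assumes "degree p \<le> n"
  shows "Bi s p (\<rho> n) = coeff p 0 / \<kappa> n"
proof -
  have "p = (\<Sum>k\<le>n. smult (coeff p k) (monom 1 k))"
    using poly_as_sum_of_monoms'[OF assms] by (simp add: smult_monom)
  then have "Bi s p (\<rho> n) = (\<Sum>k\<le>n. coeff p k * Bi s (monom 1 k) (\<rho> n))"
    by (metis (no_types, lifting) Bi_smult1 Bi_sum1 sum.cong)
  also have "\<dots> = (\<Sum>k\<le>n. if k = 0 then coeff p 0 / \<kappa> n else 0)"
  proof (intro sum.cong refl)
    fix k assume k: "k \<in> {..n}"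
    have e: "Bi s (monom 1 k) (\<rho> n) = Bi s (\<phi> n) (monom 1 (n - k))" using k by (intro Bi_monom_rho) auto
    show "coeff p k * Bi s (monom 1 k) (\<rho> n) = (if k = 0 then coeff p 0 / \<kappa> n else 0)"
    proof (cases "k = 0")
      case True
      have "Bi s (\<phi> n) (monom 1 n) = 1 / \<kappa> n"
        by (subst lead_inner2) (simp_all add: degree_monom_le)
      then show ?thesis using True k e by simp
    next
      case False
      have "degree (monom (1::complex) (n - k)) < n" using False k
        by (intro le_less_trans[OF degree_monom_le]) auto
      then have "Bi s (\<phi> n) (monom 1 (n - k)) = 0" by (rule orth_low2)
      then show ?thesis using False k e by simp
    qed
  qed
  also have "\<dots> = coeff p 0 / \<kappa> n" by simp
  finally show ?thesis .
qed

lemma kappa_rec: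
  "\<kappa> (Suc m) * \<kappa> (Suc m) - \<kappa> m * \<kappa> m = coeff (\<phi> (Suc m)) 0 * coeff (\<phi> (Suc m)) 0"
proof -
  define n where "n = Suc m"
  define c where "c = coeff (\<phi> n) 0"
  define V where "V = smult (\<kappa> n) (\<rho> n) - smult (\<kappa> m) (\<rho> m) - smult c (\<phi> n)"
  have cc: "cnj c = c" unfolding c_def by (rule coeff_real)
  have dV: "degree V \<le> n"
  proof -
    have "degree (smult (\<kappa> n) (\<rho> n)) \<le> n" using deg_rho[of n] degree_smult_le order.trans by blast
    moreover have "degree (smult (\<kappa> m) (\<rho> m)) \<le> n" using deg_rho[of m] degree_smult_le[of "\<kappa> m" "\<rho> m"] unfolding n_def by linarith
    moreover have "degree (smult c (\<phi> n)) \<le> n" using degree_smult_le[of c "\<phi> n"] deg[of n] by simp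
    ultimately show ?thesis unfolding V_def
      by (meson degree_diff_le le_trans)
  qed
  have "Bi s (\<phi> j) V = 0" if j: "j \<le> n" for j
  proof (cases "j = n")
    case True
    have "Bi s (\<phi> n) (\<rho> m) = 0" by (rule orth_low2) (use deg_rho[of m] n_def in auto)
    then show ?thesis unfolding V_def True
      by (simp add: Bi_diff2 Bi_smult2 rho_repr deg kappa_cnj kappa_nz orth c_def coeff_real)
  next
    case False
    then have jm: "j \<le> m" using j n_def by auto
    have "Bi s (\<phi> j) (\<phi> n) = 0" using False by (simp add: orth)
    then show ?thesis unfolding V_def using jm j
      by (simp add: Bi_diff2 Bi_smult2 rho_repr deg kappa_cnj kappa_nz)
  qed
  then have "V = 0"
    by (intro vanish[OF dV]) (subst Bi_conj, simp)
  then have "coeff V 0 = 0" by simp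
  then show ?thesis unfolding V_def n_def c_def by (simp add: rho0 algebra_simps)
qed

end

context onf begin

lemma degree_pCons0_le: "degree p \<le> k \<Longrightarrow> degree (pCons 0 p) \<le> Suc k"
  by (metis degree_pCons_le le_trans not_less_eq_eq)

lemma three_term:
  fixes m :: nat
  defines "n \<equiv> Suc m"
  assumes nz: "coeff (\<phi> n) 0 \<noteq> 0"
  defines "q \<equiv> coeff (\<phi> (n+1)) 0 / \<kappa> (n+1) * \<kappa> n / coeff (\<phi> n) 0"
  shows "smult (\<kappa> n / \<kappa> (n+1)) (\<phi> (n+1)) - pCons 0 (\<phi> n) - smult q (\<phi> n)
          + smult (\<kappa> m / \<kappa> n * q) (pCons 0 (\<phi> m)) = 0" (is "?Y = 0")
proof -
  have kn: "\<kappa> n \<noteq> 0" "\<kappa> (n+1) \<noteq> 0" "\<kappa> m \<noteq> 0" by (simp_all add: kappa_nz)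
  have c0: "coeff ?Y 0 = 0"
    using nz kn unfolding q_def by (simp add: field_simps)
  have dY1: "degree ?Y \<le> n + 1"
  proof -
    have a: "degree (smult (\<kappa> n / \<kappa> (n+1)) (\<phi> (n+1))) \<le> n+1" by (metis degree_smult_le deg)
    have b: "degree (pCons 0 (\<phi> n)) \<le> n+1" using degree_pCons0_le[of "\<phi> n" n] deg by simp
    have c: "degree (smult q (\<phi> n)) \<le> n+1" using degree_smult_le[of q "\<phi> n"] deg[of n] by simp
    have d: "degree (smult (\<kappa> m / \<kappa> n * q) (pCons 0 (\<phi> m))) \<le> n+1"
      using degree_smult_le[of "\<kappa> m / \<kappa> n * q" "pCons 0 (\<phi> m)"] degree_pCons0_le[of "\<phi> m" m] deg[of m]
      unfolding n_def by simp
    show ?thesis using a b c d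
      by (meson degree_add_le degree_diff_le)
  qed
  have cN: "coeff ?Y (n+1) = 0"
  proof -
    have "coeff (\<phi> m) n = 0" using deg[of m] unfolding n_def by (intro coeff_eq_0) simp
    moreover have "coeff (\<phi> n) (n+1) = 0" using deg[of n] by (intro coeff_eq_0) simp
    ultimately show ?thesis using kn by (simp add: kappa_coeff)
  qed
  have dY: "degree ?Y \<le> n" using degree_drop[of ?Y n] dY1 cN by simp
  obtain a S where YS: "?Y = pCons a S" by (cases "?Y") auto
  have a0: "a = 0" using arg_cong[OF YS, of "\<lambda>p. coeff p 0"] c0 by (simp only: coeff_pCons_0)
  have dS: "degree S \<le> m"
  proof (cases "S = 0")
    case False
    then have "degree ?Y = Suc (degree S)" using YS by simp
    then show ?thesis using dY unfolding n_def by simp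
  qed simp
  have "Bi s S (\<phi> j) = 0" if j: "j \<le> m" for j
  proof -
    have "Bi s S (\<phi> j) = Bi s ?Y (pCons 0 (\<phi> j))" using YS a0 by (simp add: Bi_shift)
    also have "\<dots> = 0"
    proof -
      have dj: "degree (pCons 0 (\<phi> j)) \<le> n" using degree_pCons0_le[of "\<phi> j" j] deg[of j] j unfolding n_def by simp
      have B1: "Bi s (\<phi> (n+1)) (pCons 0 (\<phi> j)) = 0" by (rule orth_low2) (use dj in simp)
      have B2: "Bi s (pCons 0 (\<phi> n)) (pCons 0 (\<phi> j)) = 0" using j unfolding n_def by (simp add: Bi_shift orth)
      have B3: "Bi s (\<phi> n) (pCons 0 (\<phi> j)) = (if j = m then \<kappa> m / \<kappa> n else 0)"
      proof -
        have "Bi s (\<phi> n) (pCons 0 (\<phi> j)) = cnj (coeff (pCons 0 (\<phi> j)) n) / \<kappa> n"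
          by (rule lead_inner2[OF dj])
        also have "coeff (pCons 0 (\<phi> j)) n = coeff (\<phi> j) m" unfolding n_def by simp
        also have "coeff (\<phi> j) m = (if j = m then \<kappa> m else 0)"
          using deg[of j] j by (auto simp: kappa_coeff intro: coeff_eq_0)
        finally show ?thesis by (auto simp: kappa_cnj)
      qed
      have B4: "Bi s (pCons 0 (\<phi> m)) (pCons 0 (\<phi> j)) = (if j = m then 1 else 0)"
        by (simp add: Bi_shift orth)
      show ?thesis
        by (simp only: Bi_add1 Bi_diff1 Bi_smult1 B1 B2 B3 B4) simp
    qed
    finally show ?thesis .
  qed
  then have "S = 0" by (intro vanish[OF dS])
  then show ?thesis using YS a0 by simp
qed

end

definition pdiff :: "(real \<Rightarrow> complex poly) \<Rightarrow> complex poly \<Rightarrow> real \<Rightarrow> bool" where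
  "pdiff F D t \<longleftrightarrow> (\<forall>j. ((\<lambda>s. coeff (F s) j) has_vector_derivative coeff D j) (at t))"

lemma pdiffD: "pdiff F D t \<Longrightarrow> ((\<lambda>s. coeff (F s) j) has_vector_derivative coeff D j) (at t)"
  unfolding pdiff_def by blast

lemma pdiff_const: "pdiff (\<lambda>s. p) 0 t"
  unfolding pdiff_def by simp

lemma pdiff_add: "pdiff F D t \<Longrightarrow> pdiff G E t \<Longrightarrow> pdiff (\<lambda>s. F s + G s) (D + E) t"
  unfolding pdiff_def by (auto intro!: derivative_intros)

lemma pdiff_diff: "pdiff F D t \<Longrightarrow> pdiff G E t \<Longrightarrow> pdiff (\<lambda>s. F s - G s) (D - E) t"
  unfolding pdiff_def by (auto intro!: derivative_intros)

lemma pdiff_smult: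
  assumes "(c has_vector_derivative c') (at t)" "pdiff F D t"
  shows "pdiff (\<lambda>s. smult (c s) (F s)) (smult (c t) D + smult c' (F t)) t"
  unfolding pdiff_def
proof
  fix j
  have "((\<lambda>s. c s * coeff (F s) j) has_vector_derivative (c t * coeff D j + c' * coeff (F t) j)) (at t)"
    by (rule has_vector_derivative_mult[OF assms(1) pdiffD[OF assms(2)]])
  then show "((\<lambda>s. coeff (smult (c s) (F s)) j) has_vector_derivative coeff (smult (c t) D + smult c' (F t)) j) (at t)"
    by simp
qed

lemma pdiff_sum:
  "(\<And>i. i \<in> A \<Longrightarrow> pdiff (F i) (D i) t) \<Longrightarrow> pdiff (\<lambda>s. \<Sum>i\<in>A. F i s) (\<Sum>i\<in>A. D i) t"
proof (induction A rule: infinite_finite_induct)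
  case (infinite A) then show ?case by (simp add: pdiff_const)
next
  case empty then show ?case by (simp add: pdiff_const)
next
  case (insert x F) then show ?case by (simp add: pdiff_add)
qed

lemma pdiff_pCons0: "pdiff F D t \<Longrightarrow> pdiff (\<lambda>s. pCons 0 (F s)) (pCons 0 D) t"
  unfolding pdiff_def
proof
  fix j assume a: "\<forall>j. ((\<lambda>s. coeff (F s) j) has_vector_derivative coeff D j) (at t)"
  show "((\<lambda>s. coeff (pCons 0 (F s)) j) has_vector_derivative coeff (pCons 0 D) j) (at t)"
    using a by (cases j) simp_all
qed

lemma pdiff_cong:
  assumes "pdiff F D t" "t > 0" "\<And>s. s > 0 \<Longrightarrow> F s = G s"
  shows "pdiff G D t"
  unfolding pdiff_def
proof
  fix j
  show "((\<lambda>s. coeff (G s) j) has_vector_derivative coeff D j) (at t)"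
    by (rule has_vector_derivative_transform_within_open[OF pdiffD[OF assms(1)], of "{0<..}"])
       (use assms in auto)
qed

lemma Bi_shiftL:
  assumes "degree p \<le> N" "degree q \<le> N"
  shows "Bi s (pCons 0 p) q = (\<Sum>j\<le>N. \<Sum>k\<le>N. coeff p j * cnj (coeff q k) * gg s (int j - int k + 1))"
proof -
  have d: "degree (pCons 0 p) \<le> Suc N" using assms(1) by (metis degree_pCons_le le_trans not_less_eq_eq)
  show ?thesis
    unfolding Bi_ext[OF d assms(2)]
    by (simp add: sum.atMost_Suc_shift del: sum.atMost_Suc) (simp add: algebra_simps)
qed

lemma Bi_shiftR:
  assumes "degree p \<le> N" "degree q \<le> N"
  shows "Bi s p (pCons 0 q) = (\<Sum>j\<le>N. \<Sum>k\<le>N. coeff p j * cnj (coeff q k) * gg s (int j - int k - 1))"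
proof -
  have d: "degree (pCons 0 q) \<le> Suc N" using assms(2) by (metis degree_pCons_le le_trans not_less_eq_eq)
  show ?thesis
    unfolding Bi_ext[OF assms(1) d]
    by (simp add: sum.atMost_Suc_shift del: sum.atMost_Suc) (simp add: algebra_simps)
qed

lemma Bi_deriv:
  assumes P: "pdiff P P' t" and Q: "pdiff Q Q' t"
    and dP: "\<And>s. degree (P s) \<le> N" and dQ: "\<And>s. degree (Q s) \<le> N"
    and dP': "degree P' \<le> N" and dQ': "degree Q' \<le> N"
  shows "((\<lambda>s. Bi s (P s) (Q s)) has_vector_derivative
     (Bi t P' (Q t) + Bi t (P t) Q' + (Bi t (pCons 0 (P t)) (Q t) + Bi t (P t) (pCons 0 (Q t)))/2
      - gg t 1 * Bi t (P t) (Q t))) (at t)"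
proof -
  let ?p = "\<lambda>s j. coeff (P s) j" and ?q = "\<lambda>s k. coeff (Q s) k"
  have e: "Bi s (P s) (Q s) = (\<Sum>j\<le>N. \<Sum>k\<le>N. ?p s j * cnj (?q s k) * gg s (int j - int k))" for s
    by (rule Bi_ext[OF dP dQ])
  have "((\<lambda>s. \<Sum>j\<le>N. \<Sum>k\<le>N. ?p s j * cnj (?q s k) * gg s (int j - int k)) has_vector_derivative
     (\<Sum>j\<le>N. \<Sum>k\<le>N. (?p t j * cnj (?q t k) * ((gg t (int j - int k + 1) + gg t (int j - int k - 1))/2 - gg t 1 * gg t (int j - int k))
        + (?p t j * cnj (coeff Q' k) + coeff P' j * cnj (?q t k)) * gg t (int j - int k)))) (at t)"
    by (intro has_vector_derivative_sum has_vector_derivative_mult has_vector_derivative_cnj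
        pdiffD[OF P] pdiffD[OF Q] gg_deriv[of "int _ - int _" t, simplified])
  moreover have "(\<Sum>j\<le>N. \<Sum>k\<le>N. (?p t j * cnj (?q t k) * ((gg t (int j - int k + 1) + gg t (int j - int k - 1))/2 - gg t 1 * gg t (int j - int k))
        + (?p t j * cnj (coeff Q' k) + coeff P' j * cnj (?q t k)) * gg t (int j - int k)))
     = Bi t P' (Q t) + Bi t (P t) Q' + (Bi t (pCons 0 (P t)) (Q t) + Bi t (P t) (pCons 0 (Q t)))/2
      - gg t 1 * Bi t (P t) (Q t)"
    unfolding Bi_ext[OF dP' dQ] Bi_ext[OF dP dQ'] Bi_shiftL[OF dP dQ] Bi_shiftR[OF dP dQ] Bi_ext[OF dP dQ]
    by (simp add: algebra_simps sum.distrib sum_distrib_left sum_divide_distrib sum_subtractf)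
       (simp add: add_divide_distrib sum.distrib)
  ultimately show ?thesis unfolding e by simp
qed

lemma onf_of_family: "is_opuc_family (opuc_weight s) \<phi> \<Longrightarrow> onf s \<phi>"
  unfolding is_opuc_family_def onf_def opuc_Bi by blast

context onf begin

lemma kappa_real: "\<exists>k. \<kappa> n = of_real k \<and> k > 0"
proof -
  obtain k where k: "\<kappa> n = of_real k" using lcR[of n] unfolding \<kappa>_def by (auto elim!: Reals_cases)
  moreover have "k > 0" using lcpos[of n] k unfolding \<kappa>_def by simp
  ultimately show ?thesis by blast
qed

lemma phi0: "\<phi> 0 = 1"
proof -
  have f: "\<phi> 0 = [:\<kappa> 0:]" using deg[of 0] kappa_coeff[of 0] by (metis degree_0_id)
  have kk: "\<kappa> 0 * cnj (\<kappa> 0) = 1" using orth_same[of 0] f by (simp add: Bi_const)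
  obtain k where k: "\<kappa> 0 = of_real k" "k > 0" using kappa_real by blast
  then have "k * k = 1" using kk by (metis complex_cnj_complex_of_real of_real_eq_1_iff of_real_mult)
  then have "(k - 1) * (k + 1) = 0" by (simp add: algebra_simps)
  then have "k = 1" using k(2) by simp
  then show ?thesis using f k by (simp add: one_pCons)
qed

definition gsv where "gsv n = monom 1 n - (\<Sum>m<n. smult (Bi s (monom 1 n) (\<phi> m)) (\<phi> m))"

lemma gram_schmidt: "\<phi> n = smult (\<kappa> n) (gsv n)"
proof -
  have d: "degree (monom (1::complex) n) \<le> n" by (simp add: degree_monom_le)
  have "monom 1 n = (\<Sum>m\<le>n. smult (Bi s (monom 1 n) (\<phi> m)) (\<phi> m))" by (rule expand[OF d])
  also have "\<dots> = (\<Sum>m<n. smult (Bi s (monom 1 n) (\<phi> m)) (\<phi> m)) + smult (Bi s (monom 1 n) (\<phi> n)) (\<phi> n)"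
    by (simp add: lessThan_Suc_atMost[symmetric])
  also have "Bi s (monom 1 n) (\<phi> n) = 1 / \<kappa> n" by (simp add: lead_inner[OF d])
  finally have "gsv n = smult (1 / \<kappa> n) (\<phi> n)" unfolding gsv_def by (simp add: algebra_simps)
  then show ?thesis using kappa_nz[of n] by simp
qed

lemma gsv_norm: "\<kappa> n = of_real (1 / sqrt (Re (Bi s (gsv n) (gsv n))))"
    and gsv_pos: "Re (Bi s (gsv n) (gsv n)) > 0"
proof -
  obtain k where k: "\<kappa> n = of_real k" "k > 0" using kappa_real by blast
  have "gsv n = smult (1 / \<kappa> n) (\<phi> n)" using gram_schmidt[of n] kappa_nz[of n] by simp
  then have "Bi s (gsv n) (gsv n) = (1 / \<kappa> n) * cnj (1 / \<kappa> n)"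
    by (simp add: Bi_smult1 Bi_smult2 orth_same)
  also have "\<dots> = of_real (1 / (k * k))" using k by simp
  finally have b: "Bi s (gsv n) (gsv n) = of_real (1 / (k * k))" .
  show "Re (Bi s (gsv n) (gsv n)) > 0" using b k by simp
  have "sqrt (1 / (k * k)) = 1 / k" using k(2) by (simp add: real_sqrt_divide real_sqrt_mult_self)
  then show "\<kappa> n = of_real (1 / sqrt (Re (Bi s (gsv n) (gsv n))))" using b k by simp
qed

end

lemma real_deriv:
  assumes "(f has_vector_derivative D) (at t)" "\<And>s. cnj (f s) = f s"
  shows "cnj D = D"
proof -
  have "((\<lambda>s. cnj (f s)) has_vector_derivative cnj D) (at t)"
    by (rule has_vector_derivative_cnj[OF assms(1)])
  then have "(f has_vector_derivative cnj D) (at t)" using assms(2) by simp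
  from vector_derivative_unique_at[OF assms(1) this] show ?thesis by (rule sym)
qed

lemma deg_smult_b: "degree p \<le> n \<Longrightarrow> degree (smult c p) \<le> n"
  using degree_smult_le order.trans by blast

lemma deg_add_b: "degree p \<le> n \<Longrightarrow> degree q \<le> n \<Longrightarrow> degree (p + q) \<le> n"
  by (simp add: degree_add_le)

lemma deg_diff_b: "degree p \<le> n \<Longrightarrow> degree q \<le> n \<Longrightarrow> degree (p - q :: complex poly) \<le> n"
  using degree_diff_le_max[of p q] by simp

lemma deg_pCons0_b: "degree p \<le> n \<Longrightarrow> degree (pCons 0 p) \<le> Suc n"
  by (metis degree_pCons_le le_trans not_less_eq_eq)

locale mainctx =
  fixes phi :: "nat \<Rightarrow> real \<Rightarrow> complex poly" and t :: real
  assumes tpos: "t > 0"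
    and fam: "\<And>s. s > 0 \<Longrightarrow> is_opuc_family (opuc_weight s) (\<lambda>n. phi n s)"
begin

definition sp where "sp s = (if s > 0 then s else t)"
definition ph where "ph n s = phi n (sp s)"

lemma sp_pos: "sp s > 0" unfolding sp_def using tpos by auto

lemma onf_sp: "onf (sp s) (\<lambda>n. ph n s)"
  unfolding ph_def by (rule onf_of_family[OF fam[OF sp_pos]])

lemma onf_pos: "s > 0 \<Longrightarrow> onf s (\<lambda>n. ph n s)"
  using onf_sp[of s] by (simp add: sp_def)

lemma ph_deg: "degree (ph n s) = n"
  using onf.deg[OF onf_sp] .

lemma ph_eq: "s > 0 \<Longrightarrow> ph n s = phi n s"
  unfolding ph_def sp_def by simp

lemma ph_t: "ph n t = phi n t" using ph_eq[OF tpos] .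

lemma ph_real: "cnj (coeff (ph n s) j) = coeff (ph n s) j"
  using onf.coeff_real[OF onf_sp] .

lemma onf_t: "onf t (\<lambda>n. ph n t)" using onf_pos[OF tpos] .

lemma const_deriv0:
  assumes "\<And>s. s > 0 \<Longrightarrow> f s = c"
  shows "(f has_vector_derivative 0) (at t)"
  by (rule has_vector_derivative_transform_within_open[OF has_vector_derivative_const[of c], of "{0<..}"])
     (use assms tpos in auto)

lemma exists_deriv: "\<exists>D. pdiff (ph n) D t \<and> degree D \<le> n"
proof (induction n rule: less_induct)
  case (less n)
  then have "\<forall>m\<in>{..<n}. \<exists>D. pdiff (ph m) D t \<and> degree D \<le> m" by blast
  then obtain DD where DD: "\<And>m. m < n \<Longrightarrow> pdiff (ph m) (DD m) t \<and> degree (DD m) \<le> m"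
    by (metis bchoice lessThan_iff)
  define cf where "cf = (\<lambda>m s. Bi s (monom 1 n) (ph m s))"
  define cf' where "cf' = (\<lambda>m. Bi t 0 (ph m t) + Bi t (monom 1 n) (DD m)
      + (Bi t (pCons 0 (monom 1 n)) (ph m t) + Bi t (monom 1 n) (pCons 0 (ph m t)))/2
      - gg t 1 * Bi t (monom 1 n) (ph m t))"
  have dmon: "degree (monom (1::complex) n) \<le> n" by (simp add: degree_monom_le)
  have cfd: "(cf m has_vector_derivative cf' m) (at t)" if "m < n" for m
  proof -
    have D: "pdiff (ph m) (DD m) t" "degree (DD m) \<le> m" using DD[OF that] by auto
    show ?thesis unfolding cf_def cf'_def
      by (rule Bi_deriv[OF pdiff_const D(1), where N=n]) (use that D(2) dmon in \<open>simp_all add: ph_deg\<close>)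
  qed
  define V where "V = (\<lambda>s. monom 1 n - (\<Sum>m<n. smult (cf m s) (ph m s)))"
  define V' where "V' = 0 - (\<Sum>m<n. smult (cf m t) (DD m) + smult (cf' m) (ph m t))"
  have pV: "pdiff V V' t"
    unfolding V_def V'_def
    by (intro pdiff_diff pdiff_const pdiff_sum pdiff_smult cfd) (use DD in auto)
  have dV: "degree (V s) \<le> n" for s
    unfolding V_def
    by (intro deg_diff_b dmon degree_sum_le deg_smult_b) (auto simp: ph_deg)
  have DDn: "degree (DD m) \<le> n" if "m < n" for m using DD[OF that] that by auto
  have dV': "degree V' \<le> n"
    unfolding V'_def
    by (intro deg_diff_b degree_sum_le deg_add_b deg_smult_b) (auto simp: ph_deg DDn)
  define \<beta> where "\<beta> = (\<lambda>s. Bi s (V s) (V s))"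
  define \<beta>' where "\<beta>' = Bi t V' (V t) + Bi t (V t) V' + (Bi t (pCons 0 (V t)) (V t) + Bi t (V t) (pCons 0 (V t)))/2
      - gg t 1 * Bi t (V t) (V t)"
  have bd: "(\<beta> has_vector_derivative \<beta>') (at t)"
    unfolding \<beta>_def \<beta>'_def by (rule Bi_deriv[OF pV pV dV dV dV' dV'])
  interpret T: onf t "\<lambda>n. ph n t" by (rule onf_t)
  have VT: "V t = T.gsv n" unfolding V_def T.gsv_def cf_def ..
  have bpos: "Re (\<beta> t) > 0" unfolding \<beta>_def VT by (rule T.gsv_pos)
  have rd: "((\<lambda>s. Re (\<beta> s)) has_real_derivative Re \<beta>') (at t)"
    using bounded_linear.has_vector_derivative[OF bounded_linear_Re bd]
    by (simp add: has_real_derivative_iff_has_vector_derivative)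
  have sd: "((\<lambda>s. sqrt (Re (\<beta> s))) has_real_derivative (inverse (sqrt (Re (\<beta> t))) / 2 * Re \<beta>')) (at t)"
    by (rule DERIV_chain2[OF DERIV_real_sqrt[OF bpos] rd])
  have sqnz: "sqrt (Re (\<beta> t)) \<noteq> 0" using bpos by simp
  define k' where "k' = - ((inverse (sqrt (Re (\<beta> t))) / 2 * Re \<beta>') * inverse (sqrt (Re (\<beta> t)) ^ Suc (Suc 0)))"
  have id: "((\<lambda>s. inverse (sqrt (Re (\<beta> s)))) has_real_derivative k') (at t)"
    unfolding k'_def by (rule DERIV_inverse_fun[OF sd sqnz])
  define K where "K = (\<lambda>s. complex_of_real (inverse (sqrt (Re (\<beta> s)))))"
  have Kd: "(K has_vector_derivative of_real k') (at t)"
    unfolding K_def by (rule has_vector_derivative_of_real[OF id])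
  have pKV: "pdiff (\<lambda>s. smult (K s) (V s)) (smult (K t) V' + smult (of_real k') (V t)) t"
    by (rule pdiff_smult[OF Kd pV])
  have eqs: "smult (K s) (V s) = ph n s" if "s > 0" for s
  proof -
    interpret S: onf s "\<lambda>n. ph n s" by (rule onf_pos[OF that])
    have VS: "V s = S.gsv n" unfolding V_def S.gsv_def cf_def ..
    show ?thesis unfolding VS K_def \<beta>_def
      using S.gram_schmidt[of n] S.gsv_norm[of n] by (simp add: divide_inverse)
  qed
  have "pdiff (ph n) (smult (K t) V' + smult (of_real k') (V t)) t"
    by (rule pdiff_cong[OF pKV tpos eqs])
  moreover have "degree (smult (K t) V' + smult (of_real k') (V t)) \<le> n"
    by (intro deg_add_b deg_smult_b dV dV')
  ultimately show ?case by blast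
qed

end

lemma real_polyI: "(\<And>j. cnj (coeff p j) = coeff p j) \<Longrightarrow> map_poly cnj p = p"
  by (intro poly_eqI) (simp add: coeff_map_poly)

context mainctx begin

definition DD where "DD = (SOME D. \<forall>n. pdiff (ph n) (D n) t \<and> degree (D n) \<le> n)"

lemma DD: "pdiff (ph n) (DD n) t" "degree (DD n) \<le> n"
proof -
  have "\<forall>n. \<exists>D. pdiff (ph n) D t \<and> degree D \<le> n" using exists_deriv by blast
  then have "\<exists>D. \<forall>n. pdiff (ph n) (D n) t \<and> degree (D n) \<le> n" by (rule choice)
  then have "\<forall>n. pdiff (ph n) (DD n) t \<and> degree (DD n) \<le> n"
    unfolding DD_def by (rule someI_ex)
  then show "pdiff (ph n) (DD n) t" "degree (DD n) \<le> n" by auto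
qed

lemma DD_real: "map_poly cnj (DD n) = DD n"
  by (rule real_polyI, rule real_deriv[OF pdiffD[OF DD(1)]]) (rule ph_real)

lemma ph_real_poly: "map_poly cnj (ph n t) = ph n t"
  by (rule real_polyI) (rule ph_real)

lemma pCons0_real: "map_poly cnj p = p \<Longrightarrow> map_poly cnj (pCons 0 p) = pCons 0 p"
  by (intro real_polyI) (metis coeff_map_poly coeff_pCons_0 coeff_pCons_Suc complex_cnj_zero not0_implies_Suc)

lemma deriv_eq:
  "Bi t (DD n) (ph j t) + Bi t (ph n t) (DD j) + (Bi t (pCons 0 (ph n t)) (ph j t) + Bi t (ph n t) (pCons 0 (ph j t)))/2
    - gg t 1 * (if n = j then 1 else 0) = 0"
proof -
  define N where "N = max n j"
  have d1: "\<And>s. degree (ph n s) \<le> N" unfolding N_def by (simp add: ph_deg)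
  have d1': "\<And>s. degree (ph j s) \<le> N" unfolding N_def by (simp add: ph_deg)
  have d2: "degree (DD n) \<le> N" using DD(2)[of n] unfolding N_def by auto
  have d2': "degree (DD j) \<le> N" using DD(2)[of j] unfolding N_def by auto
  have h: "((\<lambda>s. Bi s (ph n s) (ph j s)) has_vector_derivative
     (Bi t (DD n) (ph j t) + Bi t (ph n t) (DD j) + (Bi t (pCons 0 (ph n t)) (ph j t) + Bi t (ph n t) (pCons 0 (ph j t)))/2
      - gg t 1 * Bi t (ph n t) (ph j t))) (at t)"
    by (rule Bi_deriv[OF DD(1)[of n] DD(1)[of j] d1 d1' d2 d2'])
  have h0: "((\<lambda>s. Bi s (ph n s) (ph j s)) has_vector_derivative 0) (at t)"
    by (rule const_deriv0) (simp add: onf.orth[OF onf_pos])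
  have "Bi t (ph n t) (ph j t) = (if n = j then 1 else 0)" by (rule onf.orth[OF onf_t])
  then show ?thesis using vector_derivative_unique_at[OF h h0] by simp
qed

end

context mainctx begin

interpretation T: onf t "\<lambda>m. ph m t" by (rule onf_t)

lemma Bi_real_t: "map_poly cnj p = p \<Longrightarrow> map_poly cnj q = q \<Longrightarrow> cnj (Bi t p q) = Bi t p q"
  by (rule T.Bi_real)

lemma Xzero:
  fixes k :: nat
  defines "n \<equiv> Suc k"
  shows "smult 2 (DD n) = smult (gg t 1) (ph n t) - pCons 0 (ph n t)
     + smult (T.\<kappa> n / T.\<kappa> (n+1)) (ph (n+1) t) - smult (T.\<kappa> k / T.\<kappa> n) (ph k t)"
proof -
  define r where "r = gg t 1"
  define X where "X = smult 2 (DD n) - (smult r (ph n t) - pCons 0 (ph n t)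
     + smult (T.\<kappa> n / T.\<kappa> (n+1)) (ph (n+1) t) - smult (T.\<kappa> k / T.\<kappa> n) (ph k t))"
  have kneq: "k \<noteq> n" "n \<noteq> k" "n + 1 \<noteq> k" "k \<noteq> n + 1" "n + 1 \<noteq> n" "n \<noteq> n + 1" unfolding n_def by simp_all
  have kn: "T.\<kappa> n \<noteq> 0" "T.\<kappa> (n+1) \<noteq> 0" by (simp_all add: T.kappa_nz)
  have dX: "degree X \<le> n + 1"
    unfolding X_def
    by (intro deg_diff_b deg_add_b deg_smult_b)
       (use DD(2)[of n] deg_pCons0_b[of "ph n t" n] in \<open>simp_all add: ph_deg n_def\<close>)
  have "Bi t X (ph j t) = 0" if j: "j \<le> n + 1" for j
  proof -
    have BX: "Bi t X (ph j t) = 2 * Bi t (DD n) (ph j t) - (r * Bi t (ph n t) (ph j t) - Bi t (pCons 0 (ph n t)) (ph j t)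
        + T.\<kappa> n / T.\<kappa> (n+1) * Bi t (ph (n+1) t) (ph j t) - T.\<kappa> k / T.\<kappa> n * Bi t (ph k t) (ph j t))"
      unfolding X_def by (simp only: Bi_diff1 Bi_add1 Bi_smult1)
    consider "j = n + 1" | "j = n" | "j < n" using j by linarith
    then show ?thesis
    proof cases
      case 1
      have a: "Bi t (DD n) (ph j t) = 0" unfolding 1 by (rule T.orth_low) (use DD(2)[of n] in simp)
      have dz: "degree (pCons 0 (ph n t)) \<le> n + 1" using deg_pCons0_b[of "ph n t" n] by (simp add: ph_deg)
      have "Bi t (pCons 0 (ph n t)) (ph (n+1) t) = coeff (pCons 0 (ph n t)) (n+1) / T.\<kappa> (n+1)"
        by (rule T.lead_inner[OF dz])
      also have "coeff (pCons 0 (ph n t)) (n+1) = T.\<kappa> n" by (simp add: T.kappa_coeff)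
      finally have b: "Bi t (pCons 0 (ph n t)) (ph j t) = T.\<kappa> n / T.\<kappa> (n+1)" unfolding 1 .
      show ?thesis unfolding BX a b using 1 by (simp add: T.orth n_def)
    next
      case 2
      define A where "A = Bi t (DD n) (ph n t)"
      define b where "b = Bi t (pCons 0 (ph n t)) (ph n t)"
      have e: "A + Bi t (ph n t) (DD n) + (b + Bi t (ph n t) (pCons 0 (ph n t)))/2 - r = 0"
        using deriv_eq[of n n] unfolding A_def b_def r_def by simp
      have Ar: "cnj A = A" unfolding A_def by (rule Bi_real_t[OF DD_real ph_real_poly])
      have br: "cnj b = b" unfolding b_def by (rule Bi_real_t[OF pCons0_real[OF ph_real_poly] ph_real_poly])
      have "Bi t (ph n t) (DD n) = A" using Ar unfolding A_def by (subst Bi_conj) simp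
      moreover have "Bi t (ph n t) (pCons 0 (ph n t)) = b" using br unfolding b_def by (subst Bi_conj) simp
      ultimately have "2 * A + b = r" using e by (simp add: field_simps)
      then have rr: "r = 2 * A + b" by simp
      have "Bi t X (ph j t) = 2 * A - (r - b)" using BX 2 kn kneq unfolding A_def b_def by (simp add: T.orth)
      then show ?thesis unfolding rr by simp
    next
      case 3
      have e: "Bi t (DD n) (ph j t) + Bi t (ph n t) (DD j) + (Bi t (pCons 0 (ph n t)) (ph j t) + Bi t (ph n t) (pCons 0 (ph j t)))/2 = 0"
        using deriv_eq[of n j] 3 by simp
      have z1: "Bi t (ph n t) (DD j) = 0" by (rule T.orth_low2) (use DD(2)[of j] 3 in simp)
      have dj: "degree (pCons 0 (ph j t)) \<le> n" using deg_pCons0_b[of "ph j t" j] 3 by (simp add: ph_deg)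
      have z2: "Bi t (ph n t) (pCons 0 (ph j t)) = (if j = k then T.\<kappa> k / T.\<kappa> n else 0)"
      proof -
        have "Bi t (ph n t) (pCons 0 (ph j t)) = cnj (coeff (pCons 0 (ph j t)) n) / T.\<kappa> n"
          by (rule T.lead_inner2[OF dj])
        also have "coeff (pCons 0 (ph j t)) n = coeff (ph j t) k" unfolding n_def by simp
        also have "coeff (ph j t) k = (if j = k then T.\<kappa> k else 0)"
          using ph_deg[of j t] 3 unfolding n_def
          by (auto simp: T.kappa_coeff intro: coeff_eq_0)
        finally show ?thesis by (auto simp: T.kappa_cnj)
      qed
      show ?thesis unfolding BX using e z1 z2 3 unfolding n_def
        by (auto simp: T.orth field_simps)
    qed
  qed
  then have "X = 0" by (intro T.vanish[OF dX])
  then show ?thesis unfolding X_def r_def by simp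
qed

end

context mainctx begin

interpretation T: onf t "\<lambda>m. ph m t" by (rule onf_t)

lemma main_formula:
  fixes k :: nat
  defines "n \<equiv> Suc k"
  assumes nz: "coeff (ph n t) 0 \<noteq> 0"
  defines "q \<equiv> coeff (ph (n+1) t) 0 / T.\<kappa> (n+1) * T.\<kappa> n / coeff (ph n t) 0"
  shows "smult 2 (DD n) = smult (gg t 1 + q) (ph n t) - smult (T.\<kappa> k / T.\<kappa> n) (ph k t)
           - smult (T.\<kappa> k / T.\<kappa> n * q) (pCons 0 (ph k t))"
proof -
  have Y: "smult (T.\<kappa> n / T.\<kappa> (n+1)) (ph (n+1) t) - pCons 0 (ph n t) - smult q (ph n t)
          + smult (T.\<kappa> k / T.\<kappa> n * q) (pCons 0 (ph k t)) = 0"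
    using T.three_term[of k] nz unfolding n_def q_def by simp
  have X: "smult 2 (DD n) = smult (gg t 1) (ph n t) - pCons 0 (ph n t)
     + smult (T.\<kappa> n / T.\<kappa> (n+1)) (ph (n+1) t) - smult (T.\<kappa> k / T.\<kappa> n) (ph k t)"
    unfolding n_def by (rule Xzero)
  have A: "smult (T.\<kappa> n / T.\<kappa> (n+1)) (ph (n+1) t) - pCons 0 (ph n t)
      = smult q (ph n t) - smult (T.\<kappa> k / T.\<kappa> n * q) (pCons 0 (ph k t))"
    using Y by (simp add: algebra_simps eq_neg_iff_add_eq_0 add_eq_0_iff)
  show ?thesis unfolding X smult_add_left using A by (simp add: algebra_simps)
qed

end

lemma poly_sum_N: "degree (p::complex poly) \<le> N \<Longrightarrow> poly p z = (\<Sum>j\<le>N. coeff p j * z^j)"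
proof -
  assume d: "degree p \<le> N"
  have "poly p z = poly (\<Sum>i\<le>N. monom (coeff p i) i) z" using poly_as_sum_of_monoms'[OF d] by simp
  also have "\<dots> = (\<Sum>j\<le>N. coeff p j * z^j)" by (simp add: poly_sum poly_monom)
  finally show ?thesis .
qed

context mainctx begin

interpretation T: onf t "\<lambda>m. ph m t" by (rule onf_t)

lemma transfer_deriv:
  assumes "(f has_vector_derivative D) (at t)" "\<And>s. s > 0 \<Longrightarrow> f s = g s"
  shows "(g has_vector_derivative D) (at t)"
  by (rule has_vector_derivative_transform_within_open[OF assms(1), of "{0<..}"]) (use assms tpos in auto)

lemma poly_deriv: "((\<lambda>s. poly (phi n s) z) has_vector_derivative poly (DD n) z) (at t)"
proof -
  have "((\<lambda>s. \<Sum>j\<le>n. coeff (ph n s) j * z^j) has_vector_derivative (\<Sum>j\<le>n. coeff (DD n) j * z^j)) (at t)"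
    by (intro has_vector_derivative_sum has_vector_derivative_mult_left pdiffD[OF DD(1)])
  then have "((\<lambda>s. poly (ph n s) z) has_vector_derivative poly (DD n) z) (at t)"
    using poly_sum_N[of "ph n _" n z] poly_sum_N[OF DD(2)[of n], of z] by (simp add: ph_deg)
  then show ?thesis by (rule transfer_deriv) (simp add: ph_eq)
qed

lemma lc_deriv: "((\<lambda>s. lead_coeff (phi n s)) has_vector_derivative coeff (DD n) n) (at t)"
proof -
  have "((\<lambda>s. coeff (ph n s) n) has_vector_derivative coeff (DD n) n) (at t)" by (rule pdiffD[OF DD(1)])
  then show ?thesis by (rule transfer_deriv) (simp add: ph_eq[symmetric] ph_deg)
qed

lemma c0_deriv: "((\<lambda>s. poly (phi n s) 0) has_vector_derivative coeff (DD n) 0) (at t)"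
proof -
  have "((\<lambda>s. coeff (ph n s) 0) has_vector_derivative coeff (DD n) 0) (at t)" by (rule pdiffD[OF DD(1)])
  then show ?thesis by (rule transfer_deriv) (simp add: ph_eq[symmetric] poly_0_coeff_0)
qed

lemma phi0_deriv: "((\<lambda>s. poly (phi 0 s) z) has_vector_derivative 0) (at t)"
  by (rule const_deriv0[of _ 1]) (simp add: onf.phi0[OF onf_of_family[OF fam]])

end

context mainctx begin

interpretation T: onf t "\<lambda>m. ph m t" by (rule onf_t)

lemma final_n:
  fixes n :: nat
  assumes n1: "n \<ge> 1" and nz: "poly (phi n t) 0 \<noteq> 0"
  defines "q \<equiv> poly (phi (n+1) t) 0 / lead_coeff (phi (n+1) t) * lead_coeff (phi n t) / poly (phi n t) 0"
    and "r \<equiv> complex_of_real (bessel_I 1 t / bessel_I 0 t)"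
  shows "(\<forall>z. \<exists>D. ((\<lambda>s. poly (phi n s) z) has_vector_derivative D) (at t) \<and>
             2 * D = (r + q) * poly (phi n t) z
                     - lead_coeff (phi (n-1) t) / lead_coeff (phi n t) * (1 + q * z) * poly (phi (n-1) t) z) \<and>
        (\<exists>D. ((\<lambda>s. lead_coeff (phi n s)) has_vector_derivative D) (at t) \<and>
             2 / lead_coeff (phi n t) * D = r + poly (phi (n+1) t) 0 / lead_coeff (phi (n+1) t) * poly (phi n t) 0 / lead_coeff (phi n t)) \<and>
        (\<exists>D. ((\<lambda>s. poly (phi n s) 0) has_vector_derivative D) (at t) \<and>
             2 / poly (phi n t) 0 * D = r + q - poly (phi (n-1) t) 0 / poly (phi n t) 0 * lead_coeff (phi (n-1) t) / lead_coeff (phi n t))"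
proof -
  obtain k where nk: "n = Suc k" using n1 by (cases n) auto
  have L: "lead_coeff (phi m t) = T.\<kappa> m" for m unfolding T.\<kappa>_def by (simp only: ph_t)
  have P0: "poly (phi m t) 0 = coeff (ph m t) 0" for m by (simp add: ph_t poly_0_coeff_0)
  have Pz: "poly (phi m t) z = poly (ph m t) z" for m z by (simp add: ph_t)
  have rg: "r = gg t 1" unfolding r_def gg_def gr_def by simp
  have km1: "n - 1 = k" using nk by simp
  define c where "c = (\<lambda>m. coeff (ph m t) 0)"
  define \<kappa> where "\<kappa> = T.\<kappa>"
  have cn: "c n \<noteq> 0" using nz unfolding c_def P0 .
  have kn: "\<kappa> n \<noteq> 0" "\<kappa> (n+1) \<noteq> 0" "\<kappa> k \<noteq> 0" unfolding \<kappa>_def by (simp_all add: T.kappa_nz)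
  have qq: "q = c (n+1) / \<kappa> (n+1) * \<kappa> n / c n" unfolding q_def L P0 c_def \<kappa>_def ..
  have MF: "smult 2 (DD n) = smult (gg t 1 + q) (ph n t) - smult (\<kappa> k / \<kappa> n) (ph k t)
           - smult (\<kappa> k / \<kappa> n * q) (pCons 0 (ph k t))"
    using main_formula[of k] cn unfolding nk qq c_def \<kappa>_def by simp
  have rec: "\<kappa> n * \<kappa> n - \<kappa> k * \<kappa> k = c n * c n"
    using T.kappa_rec[of k] unfolding nk c_def \<kappa>_def .
  have ckn: "coeff (ph k t) n = 0" using ph_deg[of k t] nk by (intro coeff_eq_0) simp
  have ckk: "coeff (ph k t) k = \<kappa> k" unfolding \<kappa>_def by (rule T.kappa_coeff)
  have cnn: "coeff (ph n t) n = \<kappa> n" unfolding \<kappa>_def by (rule T.kappa_coeff)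
  have part1: "\<exists>D. ((\<lambda>s. poly (phi n s) z) has_vector_derivative D) (at t) \<and>
             2 * D = (r + q) * poly (phi n t) z
                     - lead_coeff (phi (n-1) t) / lead_coeff (phi n t) * (1 + q * z) * poly (phi (n-1) t) z" for z
  proof (intro exI conjI)
    show "((\<lambda>s. poly (phi n s) z) has_vector_derivative poly (DD n) z) (at t)" by (rule poly_deriv)
    have "2 * poly (DD n) z = poly (smult 2 (DD n)) z" by simp
    also have "\<dots> = (r + q) * poly (ph n t) z - \<kappa> k / \<kappa> n * poly (ph k t) z - \<kappa> k / \<kappa> n * q * (z * poly (ph k t) z)"
      unfolding MF rg by simp
    also have "\<dots> = (r + q) * poly (phi n t) z - lead_coeff (phi (n-1) t) / lead_coeff (phi n t) * (1 + q * z) * poly (phi (n-1) t) z"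
      unfolding km1 L Pz \<kappa>_def by (simp add: algebra_simps add_divide_distrib)
    finally show "2 * poly (DD n) z = (r + q) * poly (phi n t) z - lead_coeff (phi (n-1) t) / lead_coeff (phi n t) * (1 + q * z) * poly (phi (n-1) t) z" .
  qed
  have part2: "\<exists>D. ((\<lambda>s. lead_coeff (phi n s)) has_vector_derivative D) (at t) \<and>
             2 / lead_coeff (phi n t) * D = r + poly (phi (n+1) t) 0 / lead_coeff (phi (n+1) t) * poly (phi n t) 0 / lead_coeff (phi n t)"
  proof (intro exI conjI)
    show "((\<lambda>s. lead_coeff (phi n s)) has_vector_derivative coeff (DD n) n) (at t)" by (rule lc_deriv)
    have "2 * coeff (DD n) n = coeff (smult 2 (DD n)) n" by simp
    also have "\<dots> = (r + q) * \<kappa> n - \<kappa> k / \<kappa> n * q * \<kappa> k"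
      unfolding MF rg using ckn ckk cnn nk by simp
    finally have d2: "2 * coeff (DD n) n = (r + q) * \<kappa> n - \<kappa> k / \<kappa> n * q * \<kappa> k" .
    have "2 / \<kappa> n * coeff (DD n) n = r + q * ((\<kappa> n * \<kappa> n - \<kappa> k * \<kappa> k) / (\<kappa> n * \<kappa> n))"
      using d2 kn by (simp add: field_simps)
    also have "\<dots> = r + q * (c n * c n) / (\<kappa> n * \<kappa> n)" unfolding rec by simp
    also have "\<dots> = r + c (n+1) / \<kappa> (n+1) * c n / \<kappa> n"
      unfolding qq using cn kn by (simp add: field_simps)
    finally show "2 / lead_coeff (phi n t) * coeff (DD n) n = r + poly (phi (n+1) t) 0 / lead_coeff (phi (n+1) t) * poly (phi n t) 0 / lead_coeff (phi n t)"
      unfolding L P0 c_def \<kappa>_def .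
  qed
  have part3: "\<exists>D. ((\<lambda>s. poly (phi n s) 0) has_vector_derivative D) (at t) \<and>
             2 / poly (phi n t) 0 * D = r + q - poly (phi (n-1) t) 0 / poly (phi n t) 0 * lead_coeff (phi (n-1) t) / lead_coeff (phi n t)"
  proof (intro exI conjI)
    show "((\<lambda>s. poly (phi n s) 0) has_vector_derivative coeff (DD n) 0) (at t)" by (rule c0_deriv)
    have "2 * coeff (DD n) 0 = coeff (smult 2 (DD n)) 0" by simp
    also have "\<dots> = (r + q) * c n - \<kappa> k / \<kappa> n * c k"
      unfolding MF rg c_def by simp
    finally have d3: "2 * coeff (DD n) 0 = (r + q) * c n - \<kappa> k / \<kappa> n * c k" .
    have "2 / c n * coeff (DD n) 0 = r + q - c k / c n * \<kappa> k / \<kappa> n"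
      using d3 cn kn by (simp add: field_simps)
    then show "2 / poly (phi n t) 0 * coeff (DD n) 0 = r + q - poly (phi (n-1) t) 0 / poly (phi n t) 0 * lead_coeff (phi (n-1) t) / lead_coeff (phi n t)"
      unfolding km1 L P0 c_def \<kappa>_def .
  qed
  show ?thesis using part1 part2 part3 by blast
qed

end

theorem lemma2p3:
  fixes phi :: "nat \<Rightarrow> real \<Rightarrow> complex poly" and t :: real
  assumes "t > 0"
    and "\<And>s. s > 0 \<Longrightarrow> is_opuc_family (opuc_weight s) (\<lambda>n. phi n s)"
  shows "(\<forall>z. ((\<lambda>s. poly (phi 0 s) z) has_vector_derivative 0) (at t)) \<and>
    (\<forall>n\<ge>1. poly (phi n t) 0 \<noteq> 0 \<longrightarrow>
      (let \<kappa> = (\<lambda>k. lead_coeff (phi k t)); \<phi>0 = (\<lambda>k. poly (phi k t) 0);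
           r = complex_of_real (bessel_I 1 t / bessel_I 0 t);
           q = \<phi>0 (n+1) / \<kappa> (n+1) * \<kappa> n / \<phi>0 n
       in (\<forall>z. \<exists>D. ((\<lambda>s. poly (phi n s) z) has_vector_derivative D) (at t) \<and>
               2 * D = (r + q) * poly (phi n t) z
                       - \<kappa> (n-1) / \<kappa> n * (1 + q * z) * poly (phi (n-1) t) z) \<and>
          (\<exists>D. ((\<lambda>s. lead_coeff (phi n s)) has_vector_derivative D) (at t) \<and>
               2 / \<kappa> n * D = r + \<phi>0 (n+1) / \<kappa> (n+1) * \<phi>0 n / \<kappa> n) \<and>
          (\<exists>D. ((\<lambda>s. poly (phi n s) 0) has_vector_derivative D) (at t) \<and>
               2 / \<phi>0 n * D = r + q - \<phi>0 (n-1) / \<phi>0 n * \<kappa> (n-1) / \<kappa> n)))"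
proof -
  interpret M: mainctx phi t by unfold_locales (use assms in auto)
  show ?thesis
  proof (intro conjI allI impI)
    fix z show "((\<lambda>s. poly (phi 0 s) z) has_vector_derivative 0) (at t)" by (rule M.phi0_deriv)
  next
    fix n :: nat assume a: "n \<ge> 1" and b: "poly (phi n t) 0 \<noteq> 0"
    show "let \<kappa> = (\<lambda>k. lead_coeff (phi k t)); \<phi>0 = (\<lambda>k. poly (phi k t) 0);
           r = complex_of_real (bessel_I 1 t / bessel_I 0 t);
           q = \<phi>0 (n+1) / \<kappa> (n+1) * \<kappa> n / \<phi>0 n
       in (\<forall>z. \<exists>D. ((\<lambda>s. poly (phi n s) z) has_vector_derivative D) (at t) \<and>
               2 * D = (r + q) * poly (phi n t) z
                       - \<kappa> (n-1) / \<kappa> n * (1 + q * z) * poly (phi (n-1) t) z) \<and>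
          (\<exists>D. ((\<lambda>s. lead_coeff (phi n s)) has_vector_derivative D) (at t) \<and>
               2 / \<kappa> n * D = r + \<phi>0 (n+1) / \<kappa> (n+1) * \<phi>0 n / \<kappa> n) \<and>
          (\<exists>D. ((\<lambda>s. poly (phi n s) 0) has_vector_derivative D) (at t) \<and>
               2 / \<phi>0 n * D = r + q - \<phi>0 (n-1) / \<phi>0 n * \<kappa> (n-1) / \<kappa> n)"
      unfolding Let_def by (rule M.final_n[OF a b])
  qed
qed

end
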